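(* Let $(X,M,N)$ be a localizable enhanced measurable space. Composition with the quotient map $M\to M/N$ is a bijection from the set of (complex) continuous valuations on the Boolean algebra $M/N$ onto the set of finite essential measures on $(X,M,N)$.
   Context: Enhanced measurable space: $(X,M,N)$ with $M$ a $\sigma$-algebra on $X$ and $N\subset M$ closed under arbitrary subsets and countable unions; localizable if $M/N$ is complete and $1$ is the supremum of all $a\in M/N$ such that $\{b\le a\}$ admits a faithful $[0,\infty)$-valued continuous valuation. A complex valuation on a lattice $L$ is $\nu:L\to\mathbb{C}$ with $\nu(0)=0$, $\nu(x)+\nu(y)=\nu(x\vee y)+\nu(x\wedge y)$; continuous if $\nu(\sup I)=\lim_{x\in I}\nu(x)$ for directed $I$. A finite measure is a countably additive map $\mu:M\to\mathbb{C}$ vanishing on $N$; $\mu|_m$ is its restriction to measurable subsets of $m$. $m\in M$ is $\sigma$-finite if the induced space on $m$ admits a finite measure $\nu$ with $\nu|_{m''}=0\Rightarrow m''\in N$. A finite measure $\mu$ is essential if for every $m\in M$ with $\mu|_m\neq0$ there is a $\sigma$-finite $m'\in M$, $m'\subset m$, with $\mu|_{m'}\ne0$. *)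

theory Defs
  imports "HOL-Analysis.Analysis" "HOL-Library.FuncSet"
begin

definition enhanced_measurable_space :: "'a set \<Rightarrow> 'a set set \<Rightarrow> 'a set set \<Rightarrow> bool" where
  "enhanced_measurable_space X M N \<longleftrightarrow>
     sigma_algebra X M \<and> N \<subseteq> M \<and>
     (\<forall>A\<in>N. \<forall>B. B \<subseteq> A \<longrightarrow> B \<in> N) \<and>
     (\<forall>C. countable C \<and> C \<subseteq> N \<longrightarrow> \<Union>C \<in> N)"

definition qcls :: "'a set set \<Rightarrow> 'a set set \<Rightarrow> 'a set \<Rightarrow> 'a set set" where
  "qcls M N a = {b \<in> M. (a - b) \<union> (b - a) \<in> N}"

definition quot :: "'a set set \<Rightarrow> 'a set set \<Rightarrow> 'a set set set" where
  "quot M N = qcls M N ` M"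

text \<open>Order of M/N: [a] \<le> [b] iff a - b is null (independent of representatives).\<close>
definition qle :: "'a set set \<Rightarrow> 'a set set \<Rightarrow> 'a set set \<Rightarrow> bool" where
  "qle N A B \<longleftrightarrow> (\<exists>a\<in>A. \<exists>b\<in>B. a - b \<in> N)"

definition is_lub :: "'b set \<Rightarrow> ('b \<Rightarrow> 'b \<Rightarrow> bool) \<Rightarrow> 'b set \<Rightarrow> 'b \<Rightarrow> bool" where
  "is_lub L le S s \<longleftrightarrow> s \<in> L \<and> (\<forall>x\<in>S. le x s) \<and> (\<forall>u\<in>L. (\<forall>x\<in>S. le x u) \<longrightarrow> le s u)"

definition is_glb :: "'b set \<Rightarrow> ('b \<Rightarrow> 'b \<Rightarrow> bool) \<Rightarrow> 'b set \<Rightarrow> 'b \<Rightarrow> bool" where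
  "is_glb L le S s \<longleftrightarrow> s \<in> L \<and> (\<forall>x\<in>S. le s x) \<and> (\<forall>u\<in>L. (\<forall>x\<in>S. le u x) \<longrightarrow> le u s)"

definition lsup :: "'b set \<Rightarrow> ('b \<Rightarrow> 'b \<Rightarrow> bool) \<Rightarrow> 'b set \<Rightarrow> 'b" where
  "lsup L le S = (THE s. is_lub L le S s)"

definition linf :: "'b set \<Rightarrow> ('b \<Rightarrow> 'b \<Rightarrow> bool) \<Rightarrow> 'b set \<Rightarrow> 'b" where
  "linf L le S = (THE s. is_glb L le S s)"

definition lbot :: "'b set \<Rightarrow> ('b \<Rightarrow> 'b \<Rightarrow> bool) \<Rightarrow> 'b" where
  "lbot L le = lsup L le {}"

definition directed_in :: "'b set \<Rightarrow> ('b \<Rightarrow> 'b \<Rightarrow> bool) \<Rightarrow> 'b set \<Rightarrow> bool" where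
  "directed_in L le I \<longleftrightarrow> I \<subseteq> L \<and> I \<noteq> {} \<and> (\<forall>x\<in>I. \<forall>y\<in>I. \<exists>z\<in>I. le x z \<and> le y z)"

text \<open>The filter of the net indexed by a directed set I.\<close>
definition directed_filter :: "('b \<Rightarrow> 'b \<Rightarrow> bool) \<Rightarrow> 'b set \<Rightarrow> 'b filter" where
  "directed_filter le I = (INF x\<in>I. principal {y\<in>I. le x y})"

definition valuation_on :: "'b set \<Rightarrow> ('b \<Rightarrow> 'b \<Rightarrow> bool) \<Rightarrow> ('b \<Rightarrow> 'c::{comm_monoid_add}) \<Rightarrow> bool" where
  "valuation_on L le \<nu> \<longleftrightarrow> \<nu> (lbot L le) = 0 \<and>
     (\<forall>x\<in>L. \<forall>y\<in>L. \<nu> x + \<nu> y = \<nu> (lsup L le {x, y}) + \<nu> (linf L le {x, y}))"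

definition continuous_valuation_on ::
    "'b set \<Rightarrow> ('b \<Rightarrow> 'b \<Rightarrow> bool) \<Rightarrow> ('b \<Rightarrow> 'c::{comm_monoid_add, topological_space}) \<Rightarrow> bool" where
  "continuous_valuation_on L le \<nu> \<longleftrightarrow> valuation_on L le \<nu> \<and>
     (\<forall>I. directed_in L le I \<longrightarrow> (\<nu> \<longlongrightarrow> \<nu> (lsup L le I)) (directed_filter le I))"

definition quot_complete :: "'a set set \<Rightarrow> 'a set set \<Rightarrow> bool" where
  "quot_complete M N \<longleftrightarrow> (\<forall>S \<subseteq> quot M N. \<exists>s. is_lub (quot M N) (qle N) S s)"

definition has_faithful_valuation_below :: "'a set set \<Rightarrow> 'a set set \<Rightarrow> 'a set set \<Rightarrow> bool" where
  "has_faithful_valuation_below M N a \<longleftrightarrow>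
     (let D = {b \<in> quot M N. qle N b a} in
      \<exists>\<nu> :: 'a set set \<Rightarrow> real.
        continuous_valuation_on D (qle N) \<nu> \<and>
        (\<forall>b\<in>D. \<nu> b \<ge> 0) \<and>
        (\<forall>b\<in>D. \<nu> b = 0 \<longrightarrow> b = qcls M N {}))"

definition localizable :: "'a set \<Rightarrow> 'a set set \<Rightarrow> 'a set set \<Rightarrow> bool" where
  "localizable X M N \<longleftrightarrow> quot_complete M N \<and>
     is_lub (quot M N) (qle N) {a \<in> quot M N. has_faithful_valuation_below M N a} (qcls M N X)"

definition finite_measure_on :: "'a set set \<Rightarrow> 'a set set \<Rightarrow> ('a set \<Rightarrow> complex) \<Rightarrow> bool" where
  "finite_measure_on M N \<mu> \<longleftrightarrow>
     (\<forall>A :: nat \<Rightarrow> 'a set. range A \<subseteq> M \<longrightarrow> disjoint_family A \<longrightarrow>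
        (\<lambda>n. \<mu> (A n)) sums \<mu> (\<Union>(range A))) \<and>
     (\<forall>A\<in>N. \<mu> A = 0)"

definition restr_zero :: "'a set set \<Rightarrow> ('a set \<Rightarrow> complex) \<Rightarrow> 'a set \<Rightarrow> bool" where
  "restr_zero M \<mu> m \<longleftrightarrow> (\<forall>s\<in>M. s \<subseteq> m \<longrightarrow> \<mu> s = 0)"

definition sigma_finite_set :: "'a set set \<Rightarrow> 'a set set \<Rightarrow> 'a set \<Rightarrow> bool" where
  "sigma_finite_set M N m \<longleftrightarrow>
     (\<exists>\<nu>. finite_measure_on {s \<in> M. s \<subseteq> m} {s \<in> N. s \<subseteq> m} \<nu> \<and>
        (\<forall>m''\<in>M. m'' \<subseteq> m \<longrightarrow> restr_zero M \<nu> m'' \<longrightarrow> m'' \<in> N))"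

definition essential :: "'a set set \<Rightarrow> 'a set set \<Rightarrow> ('a set \<Rightarrow> complex) \<Rightarrow> bool" where
  "essential M N \<mu> \<longleftrightarrow>
     (\<forall>m\<in>M. \<not> restr_zero M \<mu> m \<longrightarrow>
        (\<exists>m'\<in>M. m' \<subseteq> m \<and> sigma_finite_set M N m' \<and> \<not> restr_zero M \<mu> m'))"

end

theory Submission
  imports Defs
begin

definition cadd :: "'a set set \<Rightarrow> ('a set \<Rightarrow> 'b::real_normed_vector) \<Rightarrow> bool" where
  "cadd S f \<longleftrightarrow> (\<forall>A :: nat \<Rightarrow> 'a set. range A \<subseteq> S \<longrightarrow> disjoint_family A \<longrightarrow>
        (\<lambda>n. f (A n)) sums f (\<Union>(range A)))"

lemma cadd_add:
  assumes "sigma_algebra \<Omega> S" "cadd S f" "f {} = 0" "A \<in> S" "B \<in> S" "A \<inter> B = {}"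
  shows "f (A \<union> B) = f A + f B"
proof -
  interpret sigma_algebra \<Omega> S by fact
  define C where "C n = (if n = 0 then A else if n = 1 then B else {})" for n :: nat
  have r: "range C \<subseteq> S" using assms by (auto simp: C_def)
  have d: "disjoint_family C" using assms(6) unfolding disjoint_family_on_def C_def by auto
  have u: "\<Union>(range C) = A \<union> B" unfolding C_def by (auto split: if_splits)
  have s1: "(\<lambda>n. f (C n)) sums f (A \<union> B)" using assms(2) r d u unfolding cadd_def by metis
  have "(\<lambda>n. f (C n)) sums (\<Sum>n\<in>{0,1}. f (C n))"
    by (rule sums_finite) (auto simp: C_def assms(3))
  then have "(\<lambda>n. f (C n)) sums (f A + f B)" by (simp add: C_def)
  with s1 show ?thesis using sums_unique2 by blast
qed

lemma cadd_diff:
  assumes "sigma_algebra \<Omega> S" "cadd S f" "f {} = 0" "A \<in> S" "B \<in> S"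
  shows "f A = f (A \<inter> B) + f (A - B)"
proof -
  interpret sigma_algebra \<Omega> S by fact
  have "A = (A \<inter> B) \<union> (A - B)" by auto
  then show ?thesis using cadd_add[OF assms(1-3), of "A \<inter> B" "A - B"] assms by auto
qed

lemma cadd_bounded:
  fixes f :: "'a set \<Rightarrow> real"
  assumes sa: "sigma_algebra \<Omega> S" and ca: "cadd S f" and f0: "f {} = 0"
  shows "\<exists>C. \<forall>E\<in>S. f E \<le> C"
proof (rule ccontr)
  interpret sigma_algebra \<Omega> S by fact
  assume nb: "\<not> (\<exists>C. \<forall>E\<in>S. f E \<le> C)"
  define unb where "unb A \<longleftrightarrow> (\<forall>C. \<exists>E\<in>S. E \<subseteq> A \<and> f E > C)" for A
  have unbO: "unb \<Omega>" unfolding unb_def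
  proof (intro allI)
    fix C from nb obtain E where "E \<in> S" "\<not> f E \<le> C" by blast
    then show "\<exists>E\<in>S. E \<subseteq> \<Omega> \<and> f E > C" using sets_into_space by (intro bexI[of _ E]) auto
  qed
  have step: "\<exists>B. B \<in> S \<and> B \<subseteq> A \<and> unb B \<and> \<bar>f B\<bar> > real n" if A: "A \<in> S" "unb A" for A n
  proof -
    obtain E where E: "E \<in> S" "E \<subseteq> A" "f E > \<bar>f A\<bar> + real n" using A(2)[unfolded unb_def, rule_format, of "\<bar>f A\<bar> + real n"] by blast
    have fA: "f A = f (A \<inter> E) + f (A - E)" using cadd_diff[OF sa ca f0 A(1) E(1)] .
    have AE: "A \<inter> E = E" using E by auto
    show ?thesis
    proof (cases "unb E")
      case True then show ?thesis using E by (intro exI[of _ E]) auto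
    next
      case False
      then obtain C1 where "\<forall>F\<in>S. F \<subseteq> E \<longrightarrow> \<not> f F > C1" unfolding unb_def by blast
      then have C1: "\<forall>F\<in>S. F \<subseteq> E \<longrightarrow> f F \<le> C1" by (simp add: not_less)
      have "unb (A - E)"
      proof (rule ccontr)
        assume "\<not> unb (A - E)"
        then obtain C2 where "\<forall>F\<in>S. F \<subseteq> A - E \<longrightarrow> \<not> f F > C2" unfolding unb_def by blast
        then have C2: "\<forall>F\<in>S. F \<subseteq> A - E \<longrightarrow> f F \<le> C2" by (simp add: not_less)
        have "\<forall>F\<in>S. F \<subseteq> A \<longrightarrow> f F \<le> C1 + C2"
        proof (intro ballI impI)
          fix F assume F: "F \<in> S" "F \<subseteq> A"
          have "f F = f (F \<inter> E) + f (F - E)" using cadd_diff[OF sa ca f0 F(1) E(1)] .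
          also have "\<dots> \<le> C1 + C2"
          proof (rule add_mono)
            show "f (F \<inter> E) \<le> C1" using C1 F(1) E(1) by blast
            show "f (F - E) \<le> C2" using C2 F E(1) by blast
          qed
          finally show "f F \<le> C1 + C2" .
        qed
        moreover obtain E' where "E' \<in> S" "E' \<subseteq> A" "f E' > C1 + C2" using A(2)[unfolded unb_def, rule_format, of "C1 + C2"] by blast
        ultimately show False by fastforce
      qed
      moreover have "\<bar>f (A - E)\<bar> > real n" using fA AE E by auto
      ultimately show ?thesis using A E by (intro exI[of _ "A - E"]) auto
    qed
  qed
  define nxt where "nxt A n = (SOME B. B \<in> S \<and> B \<subseteq> A \<and> unb B \<and> \<bar>f B\<bar> > real n)" for A n
  have nxt: "nxt A n \<in> S \<and> nxt A n \<subseteq> A \<and> unb (nxt A n) \<and> \<bar>f (nxt A n)\<bar> > real n"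
    if "A \<in> S" "unb A" for A n
    unfolding nxt_def by (rule someI_ex) (use step[OF that] in blast)
  define sq where "sq = rec_nat \<Omega> (\<lambda>n A. nxt A n)"
  have sq0: "sq 0 = \<Omega>" and sqS: "sq (Suc n) = nxt (sq n) n" for n by (simp_all add: sq_def)
  have inv: "sq n \<in> S \<and> unb (sq n)" for n
    by (induction n) (auto simp: sq0 sqS unbO nxt)
  have dec: "sq (Suc n) \<subseteq> sq n" and big: "\<bar>f (sq (Suc n))\<bar> > real n" for n
    using nxt[OF inv[THEN conjunct1] inv[THEN conjunct2], of n n] by (auto simp: sqS)
  define D where "D n = sq n - sq (Suc n)" for n
  have DS: "range D \<subseteq> S" using inv by (auto simp: D_def)
  have decs: "m \<le> n \<Longrightarrow> sq n \<subseteq> sq m" for m n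
    by (induction n rule: dec_induct) (use dec in auto)
  have dD: "disjoint_family D"
    unfolding disjoint_family_on_def D_def
  proof (intro ballI impI)
    fix m n :: nat assume "m \<noteq> n"
    then consider "m < n" | "n < m" by linarith
    then show "(sq m - sq (Suc m)) \<inter> (sq n - sq (Suc n)) = {}"
      by cases (use decs[of "Suc m" n] decs[of "Suc n" m] in auto)
  qed
  obtain s where s: "(\<lambda>n. f (D n)) sums s" using ca DS dD unfolding cadd_def by blast
  have tel: "f (sq n) = f \<Omega> - (\<Sum>k<n. f (D k))" for n
  proof (induction n)
    case 0 then show ?case by (simp add: sq0)
  next
    case (Suc n)
    have "sq n = sq (Suc n) \<union> D n" "sq (Suc n) \<inter> D n = {}" using dec[of n] by (auto simp: D_def)
    moreover have "D n \<in> S" using DS by blast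
    ultimately have "f (sq n) = f (sq (Suc n)) + f (D n)"
      using cadd_add[OF sa ca f0, of "sq (Suc n)" "D n"] inv by metis
    then show ?case using Suc by simp
  qed
  have "convergent (\<lambda>n. \<Sum>k<n. f (D k))" using s unfolding sums_def convergent_def by blast
  then have "Bseq (\<lambda>n. \<Sum>k<n. f (D k))" by (rule convergent_imp_Bseq)
  then obtain K where K: "\<And>n. norm (\<Sum>k<n. f (D k)) \<le> K" unfolding Bseq_def by blast
  obtain n :: nat where n: "real n > \<bar>f \<Omega>\<bar> + K" using reals_Archimedean2 by blast
  have "\<bar>f (sq (Suc n))\<bar> \<le> \<bar>f \<Omega>\<bar> + K" using tel[of "Suc n"] K[of "Suc n"] by auto
  with big[of n] n show False by linarith
qed

lemma cadd_pos_part: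
  fixes f :: "'a set \<Rightarrow> real"
  assumes sa: "sigma_algebra \<Omega> S" and ca: "cadd S f" and f0: "f {} = 0"
  defines "g \<equiv> \<lambda>A. SUP E\<in>{E\<in>S. E \<subseteq> A}. f E"
  shows "cadd S g" "\<forall>A\<in>S. 0 \<le> g A" "\<forall>A\<in>S. \<forall>E\<in>S. E \<subseteq> A \<longrightarrow> f E \<le> g A"
    "\<forall>A\<in>S. g A = 0 \<longrightarrow> (\<forall>E\<in>S. E \<subseteq> A \<longrightarrow> f E \<le> 0)"
    "\<forall>A\<in>S. (\<forall>E\<in>S. E \<subseteq> A \<longrightarrow> f E = 0) \<longrightarrow> g A = 0" "g {} = 0"
proof -
  interpret sigma_algebra \<Omega> S by fact
  obtain C where C: "\<forall>E\<in>S. f E \<le> C" using cadd_bounded[OF sa ca f0] by blast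
  have bdd: "bdd_above (f ` {E\<in>S. E \<subseteq> A})" for A by (rule bdd_aboveI[of _ C]) (use C in auto)
  have ne: "{E\<in>S. E \<subseteq> A} \<noteq> {}" for A by auto
  have up: "f E \<le> g A" if "E \<in> S" "E \<subseteq> A" for E A
    unfolding g_def by (rule cSUP_upper) (use that bdd in auto)
  have least: "g A \<le> c" if "\<And>E. E \<in> S \<Longrightarrow> E \<subseteq> A \<Longrightarrow> f E \<le> c" for A c
    unfolding g_def by (rule cSUP_least) (use that ne in auto)
  have nn: "0 \<le> g A" for A using up[of "{}" A] f0 by auto
  have g0: "g {} = 0"
  proof (rule antisym)
    show "g {} \<le> 0" by (rule least) (simp add: f0)
  qed (rule nn)
  have mono: "g B \<le> g A" if "B \<subseteq> A" for A B
    by (rule least) (use up that in blast)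
  have add: "g (A \<union> B) = g A + g B" if AB: "A \<in> S" "B \<in> S" "A \<inter> B = {}" for A B
  proof (rule antisym)
    show "g (A \<union> B) \<le> g A + g B"
    proof (rule least)
      fix E assume E: "E \<in> S" "E \<subseteq> A \<union> B"
      have "f E = f (E \<inter> A) + f (E - A)" using cadd_diff[OF sa ca f0 E(1) AB(1)] .
      also have "\<dots> \<le> g A + g B"
      proof (rule add_mono)
        show "f (E \<inter> A) \<le> g A" by (rule up) (use E AB in auto)
        show "f (E - A) \<le> g B" by (rule up) (use E AB in auto)
      qed
      finally show "f E \<le> g A + g B" .
    qed
  next
    have "g A \<le> g (A \<union> B) - g B"
    proof (rule least)
      fix E assume E: "E \<in> S" "E \<subseteq> A"
      have "g B \<le> g (A \<union> B) - f E"
      proof (rule least)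
        fix F assume F: "F \<in> S" "F \<subseteq> B"
        have "f (E \<union> F) = f E + f F" using cadd_add[OF sa ca f0 E(1) F(1)] E F AB by auto
        moreover have "f (E \<union> F) \<le> g (A \<union> B)" by (rule up) (use E F in auto)
        ultimately show "f F \<le> g (A \<union> B) - f E" by simp
      qed
      then show "f E \<le> g (A \<union> B) - g B" by simp
    qed
    then show "g A + g B \<le> g (A \<union> B)" by simp
  qed
  show "cadd S g" unfolding cadd_def
  proof (intro allI impI)
    fix A :: "nat \<Rightarrow> 'a set" assume A: "range A \<subseteq> S" "disjoint_family A"
    define U where "U = \<Union>(range A)"
    have US: "U \<in> S" using A(1) unfolding U_def by auto
    have AS: "A n \<in> S" for n using A(1) by auto
    have part: "(\<Sum>k<n. g (A k)) = g (\<Union>k<n. A k)" for n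
    proof (induction n)
      case 0 then show ?case using g0 by simp
    next
      case (Suc n)
      have "(\<Union>k<Suc n. A k) = (\<Union>k<n. A k) \<union> A n" by (auto simp: lessThan_Suc)
      moreover have "(\<Union>k<n. A k) \<inter> A n = {}" using A(2) unfolding disjoint_family_on_def by (auto dest: less_imp_neq)
      moreover have "(\<Union>k<n. A k) \<in> S" using AS by auto
      ultimately show ?case using Suc add[of "\<Union>k<n. A k" "A n"] AS by simp
    qed
    have pb: "(\<Sum>k<n. g (A k)) \<le> g U" for n
      unfolding part U_def by (rule mono) auto
    have sm: "summable (\<lambda>k. g (A k))" by (rule summableI_nonneg_bounded[OF nn pb])
    have le1: "(\<Sum>k. g (A k)) \<le> g U" by (rule suminf_le_const[OF sm pb])
    have le2: "g U \<le> (\<Sum>k. g (A k))"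
    proof (rule least)
      fix E assume E: "E \<in> S" "E \<subseteq> U"
      have r: "range (\<lambda>n. E \<inter> A n) \<subseteq> S" using E AS by auto
      have d: "disjoint_family (\<lambda>n. E \<inter> A n)" using A(2) unfolding disjoint_family_on_def by auto
      have "(\<Union>n. E \<inter> A n) = E" using E unfolding U_def by auto
      then have s: "(\<lambda>n. f (E \<inter> A n)) sums f E" using ca r d unfolding cadd_def by metis
      have "f E = (\<Sum>n. f (E \<inter> A n))" using s by (simp add: sums_unique)
      also have "\<dots> \<le> (\<Sum>n. g (A n))"
      proof (rule suminf_le)
        show "f (E \<inter> A n) \<le> g (A n)" for n by (rule up) (use E AS in auto)
      qed (use s sm in \<open>auto simp: sums_iff\<close>)
      finally show "f E \<le> (\<Sum>k. g (A k))" .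
    qed
    show "(\<lambda>n. g (A n)) sums g (\<Union>(range A))"
      using sm le1 le2 unfolding U_def by (metis summable_sums antisym)
  qed
  show "\<forall>A\<in>S. 0 \<le> g A" using nn by auto
  show "\<forall>A\<in>S. \<forall>E\<in>S. E \<subseteq> A \<longrightarrow> f E \<le> g A" using up by auto
  show "\<forall>A\<in>S. g A = 0 \<longrightarrow> (\<forall>E\<in>S. E \<subseteq> A \<longrightarrow> f E \<le> 0)" using up by metis
  show "\<forall>A\<in>S. (\<forall>E\<in>S. E \<subseteq> A \<longrightarrow> f E = 0) \<longrightarrow> g A = 0"
    using least nn by (metis antisym order_refl)
  show "g {} = 0" by (rule g0)
qed

lemma cadd_real_part:
  assumes "cadd S (\<mu> :: 'a set \<Rightarrow> complex)"
  shows "cadd S (\<lambda>E. Re (\<mu> E))" "cadd S (\<lambda>E. - Re (\<mu> E))" "cadd S (\<lambda>E. Im (\<mu> E))" "cadd S (\<lambda>E. - Im (\<mu> E))"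
  using assms unfolding cadd_def by (auto intro!: sums_Re sums_Im sums_minus)

lemma cadd_pos_part_ex:
  fixes f :: "'a set \<Rightarrow> real"
  assumes sa: "sigma_algebra \<Omega> S" and ca: "cadd S f" and f0: "f {} = 0"
  obtains g where "cadd S g" "\<forall>A\<in>S. 0 \<le> g A" "\<forall>A\<in>S. \<forall>E\<in>S. E \<subseteq> A \<longrightarrow> f E \<le> g A"
    "\<forall>A\<in>S. g A = 0 \<longrightarrow> (\<forall>E\<in>S. E \<subseteq> A \<longrightarrow> f E \<le> 0)"
    "\<forall>A\<in>S. (\<forall>E\<in>S. E \<subseteq> A \<longrightarrow> f E = 0) \<longrightarrow> g A = 0" "g {} = 0"
  by (rule that[OF cadd_pos_part[OF assms]])

lemma cadd_variation:
  fixes \<mu> :: "'a set \<Rightarrow> complex"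
  assumes sa: "sigma_algebra \<Omega> S" and ca: "cadd S \<mu>" and m0: "\<mu> {} = 0"
  shows "\<exists>L. finite_measure L \<and> sets L = S \<and> space L = \<Omega> \<and> (\<forall>E\<in>S. cmod (\<mu> E) \<le> measure L E) \<and>
           (\<forall>E\<in>S. measure L E = 0 \<longleftrightarrow> (\<forall>F\<in>S. F \<subseteq> E \<longrightarrow> \<mu> F = 0))"
proof -
  interpret sigma_algebra \<Omega> S by fact
  note cr = cadd_real_part[OF ca]
  have z0: "Re (\<mu> {}) = 0" "- Re (\<mu> {}) = 0" "Im (\<mu> {}) = 0" "- Im (\<mu> {}) = 0" using m0 by simp_all
  obtain g1 where P1: "cadd S g1" "\<forall>A\<in>S. 0 \<le> g1 A" "\<forall>A\<in>S. \<forall>E\<in>S. E \<subseteq> A \<longrightarrow> Re (\<mu> E) \<le> g1 A"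
    "\<forall>A\<in>S. g1 A = 0 \<longrightarrow> (\<forall>E\<in>S. E \<subseteq> A \<longrightarrow> Re (\<mu> E) \<le> 0)"
    "\<forall>A\<in>S. (\<forall>E\<in>S. E \<subseteq> A \<longrightarrow> Re (\<mu> E) = 0) \<longrightarrow> g1 A = 0" "g1 {} = 0"
    by (rule cadd_pos_part_ex[OF sa cr(1) z0(1)])
  obtain g2 where P2: "cadd S g2" "\<forall>A\<in>S. 0 \<le> g2 A" "\<forall>A\<in>S. \<forall>E\<in>S. E \<subseteq> A \<longrightarrow> - Re (\<mu> E) \<le> g2 A"
    "\<forall>A\<in>S. g2 A = 0 \<longrightarrow> (\<forall>E\<in>S. E \<subseteq> A \<longrightarrow> - Re (\<mu> E) \<le> 0)"
    "\<forall>A\<in>S. (\<forall>E\<in>S. E \<subseteq> A \<longrightarrow> - Re (\<mu> E) = 0) \<longrightarrow> g2 A = 0" "g2 {} = 0"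
    by (rule cadd_pos_part_ex[OF sa cr(2) z0(2)])
  obtain g3 where P3: "cadd S g3" "\<forall>A\<in>S. 0 \<le> g3 A" "\<forall>A\<in>S. \<forall>E\<in>S. E \<subseteq> A \<longrightarrow> Im (\<mu> E) \<le> g3 A"
    "\<forall>A\<in>S. g3 A = 0 \<longrightarrow> (\<forall>E\<in>S. E \<subseteq> A \<longrightarrow> Im (\<mu> E) \<le> 0)"
    "\<forall>A\<in>S. (\<forall>E\<in>S. E \<subseteq> A \<longrightarrow> Im (\<mu> E) = 0) \<longrightarrow> g3 A = 0" "g3 {} = 0"
    by (rule cadd_pos_part_ex[OF sa cr(3) z0(3)])
  obtain g4 where P4: "cadd S g4" "\<forall>A\<in>S. 0 \<le> g4 A" "\<forall>A\<in>S. \<forall>E\<in>S. E \<subseteq> A \<longrightarrow> - Im (\<mu> E) \<le> g4 A"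
    "\<forall>A\<in>S. g4 A = 0 \<longrightarrow> (\<forall>E\<in>S. E \<subseteq> A \<longrightarrow> - Im (\<mu> E) \<le> 0)"
    "\<forall>A\<in>S. (\<forall>E\<in>S. E \<subseteq> A \<longrightarrow> - Im (\<mu> E) = 0) \<longrightarrow> g4 A = 0" "g4 {} = 0"
    by (rule cadd_pos_part_ex[OF sa cr(4) z0(4)])
  define lam where "lam E = g1 E + g2 E + g3 E + g4 E" for E
  have lnn: "0 \<le> lam E" if "E \<in> S" for E
  proof -
    have "0 \<le> g1 E" "0 \<le> g2 E" "0 \<le> g3 E" "0 \<le> g4 E" using P1(2) P2(2) P3(2) P4(2) that by blast+
    then show ?thesis unfolding lam_def by simp
  qed
  have l0: "lam {} = 0" unfolding lam_def using P1(6) P2(6) P3(6) P4(6) by simp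
  have lca: "cadd S lam"
    unfolding cadd_def
  proof (intro allI impI)
    fix A :: "nat \<Rightarrow> 'a set" assume A: "range A \<subseteq> S" "disjoint_family A"
    note h = P1(1)[unfolded cadd_def, rule_format, OF A] P2(1)[unfolded cadd_def, rule_format, OF A]
      P3(1)[unfolded cadd_def, rule_format, OF A] P4(1)[unfolded cadd_def, rule_format, OF A]
    show "(\<lambda>n. lam (A n)) sums lam (\<Union> (range A))"
      unfolding lam_def by (intro sums_add h)
  qed
  define L where "L = measure_of \<Omega> S (\<lambda>A. ennreal (lam A))"
  have pos: "positive S (\<lambda>A. ennreal (lam A))" unfolding positive_def using l0 by simp
  have cad: "countably_additive S (\<lambda>A. ennreal (lam A))"
    unfolding countably_additive_def
  proof (intro allI impI)
    fix A :: "nat \<Rightarrow> 'a set" assume A: "range A \<subseteq> S" "disjoint_family A" "\<Union> (range A) \<in> S"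
    have s: "(\<lambda>n. lam (A n)) sums lam (\<Union>(range A))" using lca A unfolding cadd_def by blast
    have "(\<Sum>i. ennreal (lam (A i))) = ennreal (\<Sum>i. lam (A i))"
      by (rule suminf_ennreal2) (use lnn A s in \<open>auto simp: sums_iff\<close>)
    then show "(\<Sum>i. ennreal (lam (A i))) = ennreal (lam (\<Union> (range A)))" using s by (simp add: sums_iff)
  qed
  have em: "emeasure L A = ennreal (lam A)" if "A \<in> S" for A
    unfolding L_def by (rule emeasure_measure_of_sigma[OF sa pos cad that])
  have sL: "sets L = S" unfolding L_def using sets_measure_of[OF space_closed] sigma_sets_eq by simp
  have spL: "space L = \<Omega>" unfolding L_def using space_closed by (rule space_measure_of)
  have fm: "finite_measure L"
    by (rule finite_measureI) (simp add: spL em)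
  have me: "measure L A = lam A" if "A \<in> S" for A
    using em[OF that] lnn[OF that] by (simp add: measure_def)
  show ?thesis
  proof (intro exI conjI ballI)
    show "finite_measure L" "sets L = S" "space L = \<Omega>" by fact+
    fix E assume E: "E \<in> S"
    have "cmod (\<mu> E) \<le> \<bar>Re (\<mu> E)\<bar> + \<bar>Im (\<mu> E)\<bar>" by (rule cmod_le)
    also have "\<dots> \<le> lam E"
    proof -
      have a: "Re (\<mu> E) \<le> g1 E" "- Re (\<mu> E) \<le> g2 E" "Im (\<mu> E) \<le> g3 E" "- Im (\<mu> E) \<le> g4 E"
        using P1(3)[rule_format, OF E E] P2(3)[rule_format, OF E E] P3(3)[rule_format, OF E E] P4(3)[rule_format, OF E E] by simp_all
      have "\<bar>Re (\<mu> E)\<bar> \<le> g1 E + g2 E" "\<bar>Im (\<mu> E)\<bar> \<le> g3 E + g4 E"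
        using a P1(2)[rule_format, OF E] P2(2)[rule_format, OF E] P3(2)[rule_format, OF E] P4(2)[rule_format, OF E]
        by (simp_all add: abs_le_iff)
      then show ?thesis unfolding lam_def by simp
    qed
    finally show "cmod (\<mu> E) \<le> measure L E" using me[OF E] by simp
    show "(measure L E = 0) = (\<forall>F\<in>S. F \<subseteq> E \<longrightarrow> \<mu> F = 0)"
    proof
      assume "measure L E = 0"
      then have z: "g1 E = 0" "g2 E = 0" "g3 E = 0" "g4 E = 0"
      proof -
        have "0 \<le> g1 E" "0 \<le> g2 E" "0 \<le> g3 E" "0 \<le> g4 E" using P1(2)[rule_format, OF E] P2(2)[rule_format, OF E] P3(2)[rule_format, OF E] P4(2)[rule_format, OF E] by simp_all
        moreover have "g1 E + g2 E + g3 E + g4 E = 0" using me[OF E] \<open>measure L E = 0\<close> unfolding lam_def by simp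
        ultimately show "g1 E = 0" "g2 E = 0" "g3 E = 0" "g4 E = 0" by linarith+
      qed
      show "\<forall>F\<in>S. F \<subseteq> E \<longrightarrow> \<mu> F = 0"
      proof (intro ballI impI)
        fix F assume F: "F \<in> S" "F \<subseteq> E"
        have "Re (\<mu> F) \<le> 0" "- Re (\<mu> F) \<le> 0" "Im (\<mu> F) \<le> 0" "- Im (\<mu> F) \<le> 0"
          using P1(4)[rule_format, OF E z(1) F] P2(4)[rule_format, OF E z(2) F] P3(4)[rule_format, OF E z(3) F] P4(4)[rule_format, OF E z(4) F] by simp_all
        then show "\<mu> F = 0" by (simp add: complex_eq_iff)
      qed
    next
      assume z: "\<forall>F\<in>S. F \<subseteq> E \<longrightarrow> \<mu> F = 0"
      have "g1 E = 0" "g2 E = 0" "g3 E = 0" "g4 E = 0"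
        using P1(5)[rule_format, OF E] P2(5)[rule_format, OF E] P3(5)[rule_format, OF E] P4(5)[rule_format, OF E] z by simp_all
      then show "measure L E = 0" using me[OF E] unfolding lam_def by simp
    qed
  qed
qed

lemma eventually_directed_filter:
  assumes d: "directed_in L le I" and tr: "\<And>x y z. x \<in> I \<Longrightarrow> y \<in> I \<Longrightarrow> z \<in> I \<Longrightarrow> le x y \<Longrightarrow> le y z \<Longrightarrow> le x z"
  shows "eventually P (directed_filter le I) \<longleftrightarrow> (\<exists>x\<in>I. \<forall>y\<in>I. le x y \<longrightarrow> P y)"
proof -
  have ne: "I \<noteq> {}" and dd: "\<And>x y. x \<in> I \<Longrightarrow> y \<in> I \<Longrightarrow> \<exists>z\<in>I. le x z \<and> le y z"
    using d unfolding directed_in_def by auto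
  have "eventually P (INF x\<in>I. principal {y\<in>I. le x y}) \<longleftrightarrow> (\<exists>x\<in>I. eventually P (principal {y\<in>I. le x y}))"
  proof (rule eventually_INF_base[OF ne])
    fix a b assume ab: "a \<in> I" "b \<in> I"
    then obtain z where z: "z \<in> I" "le a z" "le b z" using dd by blast
    have "{y\<in>I. le z y} \<subseteq> {y\<in>I. le a y} \<inter> {y\<in>I. le b y}"
      using z ab tr by blast
    then have "principal {y\<in>I. le z y} \<le> inf (principal {y\<in>I. le a y}) (principal {y\<in>I. le b y})"
      by (simp only: inf_principal principal_le_iff)
    then show "\<exists>x\<in>I. principal {y\<in>I. le x y} \<le> inf (principal {y\<in>I. le a y}) (principal {y\<in>I. le b y})"
      using z(1) by blast
  qed
  then show ?thesis unfolding directed_filter_def eventually_principal by auto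
qed

definition rep :: "'a set set \<Rightarrow> 'a set" where "rep A = (SOME a. a \<in> A)"

locale EMS =
  fixes X :: "'a set" and M N :: "'a set set"
  assumes ems: "enhanced_measurable_space X M N"
begin

lemma sa: "sigma_algebra X M" using ems unfolding enhanced_measurable_space_def by blast

sublocale sigma_algebra X M by (rule sa)

lemma NM: "A \<in> N \<Longrightarrow> A \<in> M" using ems unfolding enhanced_measurable_space_def by blast
lemma null_sub: "A \<in> N \<Longrightarrow> B \<subseteq> A \<Longrightarrow> B \<in> N" using ems unfolding enhanced_measurable_space_def by blast
lemma null_cUN: "countable C \<Longrightarrow> C \<subseteq> N \<Longrightarrow> \<Union>C \<in> N" using ems unfolding enhanced_measurable_space_def by blast
lemma null_empty: "{} \<in> N" using null_cUN[of "{}"] by simp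
lemma null_Un: "A \<in> N \<Longrightarrow> B \<in> N \<Longrightarrow> A \<union> B \<in> N" using null_cUN[of "{A, B}"] by simp
lemma null_UN: "(\<And>n::nat. A n \<in> N) \<Longrightarrow> (\<Union>n. A n) \<in> N" using null_cUN[of "range A"] by auto
lemma null_finUN: "finite F \<Longrightarrow> (\<And>x. x \<in> F \<Longrightarrow> A x \<in> N) \<Longrightarrow> (\<Union>x\<in>F. A x) \<in> N"
  using null_cUN[of "A ` F"] by (auto intro: countable_finite)

abbreviation "Q \<equiv> quot M N"
abbreviation "cl \<equiv> qcls M N"
abbreviation "le \<equiv> qle N"

lemma qcls_mem: "a \<in> M \<Longrightarrow> a \<in> cl a" unfolding qcls_def using null_empty by auto

lemma qcls_eq: assumes "a \<in> M" "b \<in> M" shows "cl a = cl b \<longleftrightarrow> (a - b) \<union> (b - a) \<in> N"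
proof
  assume "cl a = cl b" then have "a \<in> cl b" using qcls_mem[OF assms(1)] by simp
  then show "(a - b) \<union> (b - a) \<in> N" unfolding qcls_def by (auto simp: Un_commute)
next
  assume ab: "(a - b) \<union> (b - a) \<in> N"
  have *: "cl x \<subseteq> cl y" if "x \<in> M" "y \<in> M" "(x - y) \<union> (y - x) \<in> N" for x y
  proof
    fix z assume "z \<in> cl x"
    then have z: "z \<in> M" "(x - z) \<union> (z - x) \<in> N" unfolding qcls_def by auto
    have "(y - z) \<union> (z - y) \<subseteq> ((x - z) \<union> (z - x)) \<union> ((x - y) \<union> (y - x))" by auto
    then have "(y - z) \<union> (z - y) \<in> N" using null_Un[OF z(2) that(3)] null_sub by blast
    then show "z \<in> cl y" using z unfolding qcls_def by auto
  qed
  show "cl a = cl b" using *[OF assms ab] *[OF assms(2,1)] ab by (auto simp: Un_commute)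
qed

lemma qcls_in: "a \<in> M \<Longrightarrow> cl a \<in> Q" unfolding quot_def by auto

lemma quotE: assumes "A \<in> Q" obtains a where "a \<in> M" "A = cl a"
  using assms unfolding quot_def by auto

lemma rep_q: assumes "A \<in> Q" shows "rep A \<in> M" "cl (rep A) = A" "rep A \<in> A"
proof -
  obtain a where a: "a \<in> M" "A = cl a" using assms by (rule quotE)
  have "rep A \<in> A" unfolding rep_def using qcls_mem[OF a(1)] a(2) by (metis someI_ex)
  then show "rep A \<in> A" .
  then have r: "rep A \<in> M" "(a - rep A) \<union> (rep A - a) \<in> N" using a unfolding qcls_def by auto
  show "rep A \<in> M" by fact
  show "cl (rep A) = A" using qcls_eq[OF r(1) a(1)] r a by (auto simp: Un_commute)
qed

lemma rep_cl: assumes "a \<in> M" shows "rep (cl a) \<in> M" "(rep (cl a) - a) \<union> (a - rep (cl a)) \<in> N"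
  using rep_q[OF qcls_in[OF assms]] qcls_eq[OF _ assms] by auto

lemma qle_iff: assumes "a \<in> M" "b \<in> M" shows "le (cl a) (cl b) \<longleftrightarrow> a - b \<in> N"
proof
  assume "le (cl a) (cl b)"
  then obtain a' b' where ab: "a' \<in> cl a" "b' \<in> cl b" "a' - b' \<in> N" unfolding qle_def by blast
  then have "(a - a') \<union> (a' - a) \<in> N" "(b - b') \<union> (b' - b) \<in> N" unfolding qcls_def by auto
  moreover have "a - b \<subseteq> ((a - a') \<union> (a' - a)) \<union> (a' - b') \<union> ((b - b') \<union> (b' - b))" by auto
  ultimately show "a - b \<in> N" using ab(3) null_Un null_sub by metis
next
  assume "a - b \<in> N" then show "le (cl a) (cl b)" unfolding qle_def using qcls_mem assms by blast
qed

lemma qle_subset: assumes "a \<in> M" "b \<in> M" "a \<subseteq> b" shows "le (cl a) (cl b)"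
proof -
  have e: "a - b = {}" using assms(3) by blast
  have "a - b \<in> N" unfolding e by (rule null_empty)
  then show ?thesis using qle_iff[OF assms(1,2)] by simp
qed

lemma qle_rep: assumes "x \<in> Q" "y \<in> Q" shows "le x y \<longleftrightarrow> rep x - rep y \<in> N"
  using qle_iff[OF rep_q(1)[OF assms(1)] rep_q(1)[OF assms(2)]] rep_q(2)[OF assms(1)] rep_q(2)[OF assms(2)] by simp

lemma qle_refl: "x \<in> Q \<Longrightarrow> le x x" using qle_rep null_empty by auto

lemma qle_trans: assumes "x \<in> Q" "y \<in> Q" "z \<in> Q" "le x y" "le y z" shows "le x z"
proof -
  have "rep x - rep z \<subseteq> (rep x - rep y) \<union> (rep y - rep z)" by auto
  then show ?thesis using assms qle_rep null_Un null_sub by metis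
qed

lemma qle_antisym: assumes "x \<in> Q" "y \<in> Q" "le x y" "le y x" shows "x = y"
proof -
  have "cl (rep x) = cl (rep y)" using assms qle_rep qcls_eq rep_q(1) null_Un by metis
  then show ?thesis using rep_q(2) assms by metis
qed

lemma lsup_eq: assumes "L \<subseteq> Q" "is_lub L le S s" shows "lsup L le S = s"
  unfolding lsup_def
proof (rule the_equality)
  fix t assume "is_lub L le S t"
  then have "t \<in> L" "\<forall>x\<in>S. le x t" "\<forall>u\<in>L. (\<forall>x\<in>S. le x u) \<longrightarrow> le t u" unfolding is_lub_def by auto
  moreover have "s \<in> L" "\<forall>x\<in>S. le x s" "\<forall>u\<in>L. (\<forall>x\<in>S. le x u) \<longrightarrow> le s u" using assms(2) unfolding is_lub_def by auto
  ultimately have "le t s" "le s t" by auto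
  then show "t = s" using qle_antisym assms(1) \<open>t \<in> L\<close> \<open>s \<in> L\<close> by blast
qed (rule assms(2))

lemma linf_eq: assumes "L \<subseteq> Q" "is_glb L le S s" shows "linf L le S = s"
  unfolding linf_def
proof (rule the_equality)
  fix t assume "is_glb L le S t"
  then have "t \<in> L" "\<forall>x\<in>S. le t x" "\<forall>u\<in>L. (\<forall>x\<in>S. le u x) \<longrightarrow> le u t" unfolding is_glb_def by auto
  moreover have "s \<in> L" "\<forall>x\<in>S. le s x" "\<forall>u\<in>L. (\<forall>x\<in>S. le u x) \<longrightarrow> le u s" using assms(2) unfolding is_glb_def by auto
  ultimately have "le t s" "le s t" by auto
  then show "t = s" using qle_antisym assms(1) \<open>t \<in> L\<close> \<open>s \<in> L\<close> by blast
qed (rule assms(2))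

definition Dn :: "'a set \<Rightarrow> 'a set set set" where "Dn r = {b \<in> Q. le b (cl r)}"

lemma Dn_sub: "Dn r \<subseteq> Q" unfolding Dn_def by auto

lemma Dn_X: "Dn X = Q"
proof -
  have "b \<in> Q \<Longrightarrow> le b (cl X)" for b
    using qle_iff[OF rep_q(1) top] rep_q(2) null_empty rep_q(1) sets_into_space by (metis Diff_eq_empty_iff)
  then show ?thesis unfolding Dn_def by auto
qed

lemma inDn: assumes "a \<in> M" "r \<in> M" shows "cl a \<in> Dn r \<longleftrightarrow> a - r \<in> N"
  unfolding Dn_def using qle_iff[OF assms] qcls_in[OF assms(1)] by auto

lemma Dn_rep: assumes "x \<in> Dn r" "r \<in> M" shows "rep x - r \<in> N" "rep x \<in> M" "cl (rep x) = x" "x \<in> Q"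
  using assms inDn rep_q Dn_sub by (metis subsetD)+

lemma lsup2: assumes "r \<in> M" "a \<in> M" "b \<in> M" "a - r \<in> N" "b - r \<in> N"
  shows "lsup (Dn r) le {cl a, cl b} = cl (a \<union> b)"
proof (rule lsup_eq[OF Dn_sub])
  have ab: "a \<union> b \<in> M" using assms by auto
  have "(a \<union> b) - r \<in> N" using null_Un[OF assms(4,5)] by (simp add: Un_Diff)
  then have inD: "cl (a \<union> b) \<in> Dn r" using inDn[OF ab assms(1)] by simp
  show "is_lub (Dn r) le {cl a, cl b} (cl (a \<union> b))"
    unfolding is_lub_def
  proof (intro conjI ballI impI)
    show "cl (a \<union> b) \<in> Dn r" by fact
    fix x assume "x \<in> {cl a, cl b}"
    moreover have "le (cl a) (cl (a \<union> b))" by (rule qle_subset) (use assms ab in auto)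
    moreover have "le (cl b) (cl (a \<union> b))" by (rule qle_subset) (use assms ab in auto)
    ultimately show "le x (cl (a \<union> b))" by blast
  next
    fix u assume u: "u \<in> Dn r" "\<forall>x\<in>{cl a, cl b}. le x u"
    have ur: "rep u \<in> M" "cl (rep u) = u" using Dn_rep[OF u(1) assms(1)] by auto
    have "a - rep u \<in> N" "b - rep u \<in> N" using u(2) qle_iff[OF _ ur(1)] ur(2) assms(2,3) by auto
    then have "(a \<union> b) - rep u \<in> N" using null_Un by (simp add: Un_Diff)
    then show "le (cl (a \<union> b)) u" using qle_iff[OF ab ur(1)] ur(2) by simp
  qed
qed

lemma linf2: assumes "r \<in> M" "a \<in> M" "b \<in> M" "a - r \<in> N" "b - r \<in> N"
  shows "linf (Dn r) le {cl a, cl b} = cl (a \<inter> b)"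
proof (rule linf_eq[OF Dn_sub])
  have ab: "a \<inter> b \<in> M" using assms by auto
  have "(a \<inter> b) - r \<in> N" by (rule null_sub[OF assms(4)]) blast
  then have inD: "cl (a \<inter> b) \<in> Dn r" using inDn[OF ab assms(1)] by simp
  show "is_glb (Dn r) le {cl a, cl b} (cl (a \<inter> b))"
    unfolding is_glb_def
  proof (intro conjI ballI impI)
    show "cl (a \<inter> b) \<in> Dn r" by fact
    fix x assume "x \<in> {cl a, cl b}"
    moreover have "le (cl (a \<inter> b)) (cl a)" by (rule qle_subset) (use assms ab in auto)
    moreover have "le (cl (a \<inter> b)) (cl b)" by (rule qle_subset) (use assms ab in auto)
    ultimately show "le (cl (a \<inter> b)) x" by blast
  next
    fix u assume u: "u \<in> Dn r" "\<forall>x\<in>{cl a, cl b}. le u x"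
    have ur: "rep u \<in> M" "cl (rep u) = u" using Dn_rep[OF u(1) assms(1)] by auto
    have "rep u - a \<in> N" "rep u - b \<in> N" using u(2) qle_iff[OF ur(1)] ur(2) assms(2,3) by auto
    then have "rep u - (a \<inter> b) \<in> N" using null_Un by (simp add: Diff_Int)
    then show "le u (cl (a \<inter> b))" using qle_iff[OF ur(1) ab] ur(2) by simp
  qed
qed

lemma lbot_Dn: assumes "r \<in> M" shows "lbot (Dn r) le = cl {}"
  unfolding lbot_def
proof (rule lsup_eq[OF Dn_sub])
  show "is_lub (Dn r) le {} (cl {})"
    unfolding is_lub_def
  proof (intro conjI ballI impI)
    show "cl {} \<in> Dn r" using inDn[OF empty_sets assms] null_empty by simp
  next
    fix u assume u: "u \<in> Dn r"
    have ur: "rep u \<in> M" "cl (rep u) = u" using Dn_rep[OF u(1) assms(1)] by auto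
    show "le (cl {}) u" using qle_iff[OF empty_sets ur(1)] ur(2) null_empty by simp
  qed simp
qed

lemma lsup_seq: fixes B :: "nat \<Rightarrow> 'a set" assumes "r \<in> M" "\<And>n. B n \<in> M" "\<And>n. B n - r \<in> N"
  shows "lsup (Dn r) le (range (\<lambda>n. cl (B n))) = cl (\<Union>n. B n)"
proof (rule lsup_eq[OF Dn_sub])
  have ab: "(\<Union>n. B n) \<in> M" using assms by auto
  have "(\<Union>n. B n) - r = (\<Union>n. B n - r)" by blast
  then have "(\<Union>n. B n) - r \<in> N" using null_UN[of "\<lambda>n. B n - r"] assms(3) by simp
  then have inD: "cl (\<Union>n. B n) \<in> Dn r" using inDn[OF ab assms(1)] by simp
  show "is_lub (Dn r) le (range (\<lambda>n. cl (B n))) (cl (\<Union>n. B n))"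
    unfolding is_lub_def
  proof (intro conjI ballI impI)
    show "cl (\<Union>n. B n) \<in> Dn r" by fact
    fix x assume "x \<in> range (\<lambda>n. cl (B n))"
    then obtain n where "x = cl (B n)" by auto
    moreover have "le (cl (B n)) (cl (\<Union>n. B n))" by (rule qle_subset) (use assms ab in auto)
    ultimately show "le x (cl (\<Union>n. B n))" by simp
  next
    fix u assume u: "u \<in> Dn r" "\<forall>x\<in>range (\<lambda>n. cl (B n)). le x u"
    have ur: "rep u \<in> M" "cl (rep u) = u" using Dn_rep[OF u(1) assms(1)] by auto
    have "B n - rep u \<in> N" for n using u(2) qle_iff[OF assms(2) ur(1)] ur(2) by auto
    moreover have "(\<Union>n. B n) - rep u = (\<Union>n. B n - rep u)" by blast
    ultimately have "(\<Union>n. B n) - rep u \<in> N" using null_UN[of "\<lambda>n. B n - rep u"] by simp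
    then show "le (cl (\<Union>n. B n)) u" using qle_iff[OF ab ur(1)] ur(2) by simp
  qed
qed

end

context EMS begin

lemma Dn_directed_seq:
  fixes B :: "nat \<Rightarrow> 'a set"
  assumes r: "r \<in> M" and B: "\<And>n. B n \<in> M" "\<And>n. B n - r \<in> N" and mono: "\<And>m n. m \<le> n \<Longrightarrow> B m \<subseteq> B n"
  shows "directed_in (Dn r) le (range (\<lambda>n. cl (B n)))"
    and "filterlim (\<lambda>n. cl (B n)) (directed_filter le (range (\<lambda>n. cl (B n)))) sequentially"
proof -
  have sub: "range (\<lambda>n. cl (B n)) \<subseteq> Dn r" using inDn[OF B(1) r] B(2) by auto
  show d: "directed_in (Dn r) le (range (\<lambda>n. cl (B n)))"
    unfolding directed_in_def
  proof (intro conjI ballI)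
    fix x y assume "x \<in> range (\<lambda>n. cl (B n))" "y \<in> range (\<lambda>n. cl (B n))"
    then obtain m n where mn: "x = cl (B m)" "y = cl (B n)" by auto
    have "le x (cl (B (max m n)))" "le y (cl (B (max m n)))"
      unfolding mn by (rule qle_subset[OF B(1) B(1) mono], simp)+
    then show "\<exists>z\<in>range (\<lambda>n. cl (B n)). le x z \<and> le y z" by blast
  qed (use sub in auto)
  have tr: "\<And>x y z. x \<in> range (\<lambda>n. cl (B n)) \<Longrightarrow> y \<in> range (\<lambda>n. cl (B n)) \<Longrightarrow> z \<in> range (\<lambda>n. cl (B n)) \<Longrightarrow> le x y \<Longrightarrow> le y z \<Longrightarrow> le x z"
    using qle_trans sub Dn_sub by (meson subsetD)
  show "filterlim (\<lambda>n. cl (B n)) (directed_filter le (range (\<lambda>n. cl (B n)))) sequentially"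
    unfolding filterlim_iff
  proof (intro allI impI)
    fix P assume "eventually P (directed_filter le (range (\<lambda>n. cl (B n))))"
    then have "\<exists>x\<in>range (\<lambda>n. cl (B n)). \<forall>y\<in>range (\<lambda>n. cl (B n)). le x y \<longrightarrow> P y"
      using eventually_directed_filter[OF d tr, where P=P] by simp
    then obtain x where x: "x \<in> range (\<lambda>n. cl (B n))" "\<forall>y\<in>range (\<lambda>n. cl (B n)). le x y \<longrightarrow> P y"
      by blast
    then obtain n0 where n0: "x = cl (B n0)" by auto
    show "eventually (\<lambda>n. P (cl (B n))) sequentially"
      unfolding eventually_sequentially
    proof (intro exI allI impI)
      fix n assume "n0 \<le> n"
      then have "le x (cl (B n))" unfolding n0 by (rule qle_subset[OF B(1) B(1) mono])
      then show "P (cl (B n))" using x(2) by blast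
    qed
  qed
qed

lemma val_meas:
  fixes \<nu> :: "'a set set \<Rightarrow> 'c::real_normed_vector"
  assumes r: "r \<in> M" and cv: "continuous_valuation_on (Dn r) le \<nu>"
  shows "\<nu> (cl {}) = 0"
    and "\<And>a b. a \<in> M \<Longrightarrow> b \<in> M \<Longrightarrow> a - r \<in> N \<Longrightarrow> b - r \<in> N \<Longrightarrow> a \<inter> b = {} \<Longrightarrow> \<nu> (cl (a \<union> b)) = \<nu> (cl a) + \<nu> (cl b)"
    and "\<And>A. range A \<subseteq> M \<Longrightarrow> disjoint_family A \<Longrightarrow> (\<And>n. A n - r \<in> N) \<Longrightarrow> (\<lambda>n. \<nu> (cl (A n))) sums \<nu> (cl (\<Union>(range A)))"
proof -
  have v: "valuation_on (Dn r) le \<nu>" and c: "\<And>I. directed_in (Dn r) le I \<Longrightarrow> (\<nu> \<longlongrightarrow> \<nu> (lsup (Dn r) le I)) (directed_filter le I)"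
    using cv unfolding continuous_valuation_on_def by auto
  show v0: "\<nu> (cl {}) = 0" using v lbot_Dn[OF r] unfolding valuation_on_def by simp
  have modl: "\<nu> x + \<nu> y = \<nu> (lsup (Dn r) le {x, y}) + \<nu> (linf (Dn r) le {x, y})" if "x \<in> Dn r" "y \<in> Dn r" for x y
    using v that unfolding valuation_on_def by blast
  show add: "\<nu> (cl (a \<union> b)) = \<nu> (cl a) + \<nu> (cl b)"
    if ab: "a \<in> M" "b \<in> M" "a - r \<in> N" "b - r \<in> N" "a \<inter> b = {}" for a b
  proof -
    have "cl a \<in> Dn r" "cl b \<in> Dn r" using inDn[OF _ r] ab by auto
    from modl[OF this] show ?thesis
      using lsup2[OF r ab(1-4)] linf2[OF r ab(1-4)] ab(5) v0 by simp
  qed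
  show "(\<lambda>n. \<nu> (cl (A n))) sums \<nu> (cl (\<Union>(range A)))"
    if A: "range A \<subseteq> M" "disjoint_family A" "\<And>n. A n - r \<in> N" for A
  proof -
    define B where "B n = (\<Union>k<n. A k)" for n
    have AM: "A n \<in> M" for n using A(1) by auto
    have BM: "B n \<in> M" for n unfolding B_def using AM by auto
    have Br: "B n - r \<in> N" for n
    proof -
      have "B n - r = (\<Union>k\<in>{..<n}. A k - r)" unfolding B_def by blast
      then show ?thesis using null_finUN[of "{..<n}" "\<lambda>k. A k - r"] A(3) by simp
    qed
    have mono: "m \<le> n \<Longrightarrow> B m \<subseteq> B n" for m n unfolding B_def by (auto intro: order_less_le_trans)
    have part: "(\<Sum>k<n. \<nu> (cl (A k))) = \<nu> (cl (B n))" for n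
    proof (induction n)
      case 0 then show ?case using v0 by (simp add: B_def)
    next
      case (Suc n)
      have "B (Suc n) = B n \<union> A n" unfolding B_def by (auto simp: lessThan_Suc)
      moreover have "B n \<inter> A n = {}" using A(2) unfolding disjoint_family_on_def B_def by (auto dest: less_imp_neq)
      ultimately have "\<nu> (cl (B (Suc n))) = \<nu> (cl (B n)) + \<nu> (cl (A n))"
        using add[OF BM AM Br A(3)] by simp
      then show ?case using Suc by simp
    qed
    have UB: "(\<Union>n. B n) = \<Union>(range A)" unfolding B_def by auto
    have lim: "(\<nu> \<longlongrightarrow> \<nu> (cl (\<Union>n. B n))) (directed_filter le (range (\<lambda>n. cl (B n))))"
      using c[OF Dn_directed_seq(1)[OF r BM Br mono]] lsup_seq[OF r BM Br] by simp
    have "(\<lambda>n. \<nu> (cl (B n))) \<longlonglongrightarrow> \<nu> (cl (\<Union>n. B n))"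
      by (rule filterlim_compose[OF lim Dn_directed_seq(2)[OF r BM Br mono]])
    then show ?thesis unfolding sums_def part UB .
  qed
qed

lemma null_diff_sub: "a \<subseteq> b \<Longrightarrow> a - b \<in> N"
proof -
  assume "a \<subseteq> b" then have e: "a - b = {}" by blast
  show "a - b \<in> N" unfolding e by (rule null_empty)
qed

lemma cl_null: assumes "A \<in> N" shows "cl A = cl {}"
proof -
  have "(A - {}) \<union> ({} - A) = A" by blast
  then show ?thesis using qcls_eq[OF NM[OF assms] empty_sets] assms by simp
qed

lemma cl_empty_iff: assumes "A \<in> M" shows "cl A = cl {} \<longleftrightarrow> A \<in> N"
proof -
  have "(A - {}) \<union> ({} - A) = A" by blast
  then show ?thesis using qcls_eq[OF assms empty_sets] by simp
qed

lemma Dn_rep_eq: assumes "a \<in> Q" shows "{b \<in> Q. le b a} = Dn (rep a)"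
  unfolding Dn_def using rep_q(2)[OF assms] by simp

lemma dir1_fm:
  fixes \<nu> :: "'a set set \<Rightarrow> complex"
  assumes cv: "continuous_valuation_on Q le \<nu>"
  shows "finite_measure_on M N (\<lambda>m\<in>M. \<nu> (cl m))"
proof -
  have cvX: "continuous_valuation_on (Dn X) le \<nu>" using cv Dn_X by simp
  note VM = val_meas[OF top cvX]
  have "\<forall>A :: nat \<Rightarrow> 'a set. range A \<subseteq> M \<longrightarrow> disjoint_family A \<longrightarrow>
        (\<lambda>n. (\<lambda>m\<in>M. \<nu> (cl m)) (A n)) sums (\<lambda>m\<in>M. \<nu> (cl m)) (\<Union>(range A))"
  proof (intro allI impI)
    fix A :: "nat \<Rightarrow> 'a set" assume A: "range A \<subseteq> M" "disjoint_family A"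
    have AX: "A n - X \<in> N" for n using A(1) sets_into_space null_empty by (metis Diff_eq_empty_iff rangeI subsetD)
    have U: "\<Union>(range A) \<in> M" using A(1) by auto
    have AM: "A n \<in> M" for n using A(1) by auto
    show "(\<lambda>n. (\<lambda>m\<in>M. \<nu> (cl m)) (A n)) sums (\<lambda>m\<in>M. \<nu> (cl m)) (\<Union>(range A))"
      using VM(3)[OF A AX] U AM by simp
  qed
  moreover have "\<forall>A\<in>N. (\<lambda>m\<in>M. \<nu> (cl m)) A = 0"
    using cl_null NM VM(1) by simp
  ultimately show ?thesis unfolding finite_measure_on_def by blast
qed

lemma faithful_sf:
  assumes F: "finite F" "F \<subseteq> Q" "\<forall>a\<in>F. has_faithful_valuation_below M N a"
    and m': "m' \<in> M" "m' \<subseteq> \<Union>(rep ` F)"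
  shows "sigma_finite_set M N m'"
proof -
  have ex: "\<forall>a\<in>F. \<exists>\<rho> :: 'a set set \<Rightarrow> real. continuous_valuation_on (Dn (rep a)) le \<rho> \<and>
        (\<forall>b\<in>Dn (rep a). \<rho> b \<ge> 0) \<and> (\<forall>b\<in>Dn (rep a). \<rho> b = 0 \<longrightarrow> b = cl {})"
  proof
    fix a assume a: "a \<in> F"
    then have aQ: "a \<in> Q" using F(2) by blast
    show "\<exists>\<rho> :: 'a set set \<Rightarrow> real. continuous_valuation_on (Dn (rep a)) le \<rho> \<and>
        (\<forall>b\<in>Dn (rep a). \<rho> b \<ge> 0) \<and> (\<forall>b\<in>Dn (rep a). \<rho> b = 0 \<longrightarrow> b = cl {})"
    proof -
      have "has_faithful_valuation_below M N a" using F(3) a by blast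
      then obtain \<rho> :: "'a set set \<Rightarrow> real" where "continuous_valuation_on {b \<in> Q. le b a} le \<rho>"
        "\<forall>b\<in>{b \<in> Q. le b a}. \<rho> b \<ge> 0" "\<forall>b\<in>{b \<in> Q. le b a}. \<rho> b = 0 \<longrightarrow> b = cl {}"
        unfolding has_faithful_valuation_below_def Let_def by blast
      then show ?thesis unfolding Dn_rep_eq[OF aQ] by blast
    qed
  qed
  obtain \<rho> :: "'a set set \<Rightarrow> 'a set set \<Rightarrow> real" where \<rho>all: "\<forall>a\<in>F. continuous_valuation_on (Dn (rep a)) le (\<rho> a) \<and>
        (\<forall>b\<in>Dn (rep a). \<rho> a b \<ge> 0) \<and> (\<forall>b\<in>Dn (rep a). \<rho> a b = 0 \<longrightarrow> b = cl {})"
    using bchoice[OF ex] by (elim exE) iprover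
  have \<rho>: "\<And>a. a \<in> F \<Longrightarrow> continuous_valuation_on (Dn (rep a)) le (\<rho> a)"
    "\<And>a b. a \<in> F \<Longrightarrow> b \<in> Dn (rep a) \<Longrightarrow> \<rho> a b \<ge> 0"
    "\<And>a b. a \<in> F \<Longrightarrow> b \<in> Dn (rep a) \<Longrightarrow> \<rho> a b = 0 \<Longrightarrow> b = cl {}"
    using \<rho>all by simp_all
  have repM: "a \<in> F \<Longrightarrow> rep a \<in> M" for a using rep_q(1) F(2) by blast
  define \<nu>' where "\<nu>' E = complex_of_real (\<Sum>a\<in>F. \<rho> a (cl (E \<inter> rep a)))" for E
  have inD: "cl (E \<inter> rep a) \<in> Dn (rep a)" if "a \<in> F" "E \<in> M" for a E
  proof -
    have "E \<inter> rep a - rep a \<in> N" by (rule null_diff_sub) blast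
    moreover have "E \<inter> rep a \<in> M" using repM[OF that(1)] that(2) by blast
    ultimately show ?thesis using inDn[of "E \<inter> rep a" "rep a"] repM[OF that(1)] by blast
  qed
  have fm: "finite_measure_on {s \<in> M. s \<subseteq> m'} {s \<in> N. s \<subseteq> m'} \<nu>'"
    unfolding finite_measure_on_def
  proof (intro conjI allI impI ballI)
    fix A :: "nat \<Rightarrow> 'a set" assume A: "range A \<subseteq> {s \<in> M. s \<subseteq> m'}" "disjoint_family A"
    have AM: "A n \<in> M" for n using A(1) by blast
    have each: "(\<lambda>n. \<rho> a (cl (A n \<inter> rep a))) sums \<rho> a (cl (\<Union>(range A) \<inter> rep a))" if a: "a \<in> F" for a
    proof -
      have r: "range (\<lambda>n. A n \<inter> rep a) \<subseteq> M" using AM repM[OF a] by auto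
      have d: "disjoint_family (\<lambda>n. A n \<inter> rep a)" using A(2) unfolding disjoint_family_on_def by blast
      have nr: "A n \<inter> rep a - rep a \<in> N" for n
        by (rule null_diff_sub) blast
      have u: "\<Union>(range (\<lambda>n. A n \<inter> rep a)) = \<Union>(range A) \<inter> rep a" by blast
      show ?thesis using val_meas(3)[OF repM[OF a] \<rho>(1)[OF a] r d nr] u by simp
    qed
    have "(\<lambda>n. \<Sum>a\<in>F. \<rho> a (cl (A n \<inter> rep a))) sums (\<Sum>a\<in>F. \<rho> a (cl (\<Union>(range A) \<inter> rep a)))"
      by (rule sums_sum) (rule each)
    then show "(\<lambda>n. \<nu>' (A n)) sums \<nu>' (\<Union>(range A))"
      unfolding \<nu>'_def by (rule sums_of_real)
  next
    fix E assume E: "E \<in> {s \<in> N. s \<subseteq> m'}"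
    have "\<rho> a (cl (E \<inter> rep a)) = 0" if a: "a \<in> F" for a
    proof -
      have "E \<inter> rep a \<in> N" using E null_sub by blast
      then have "cl (E \<inter> rep a) = cl {}" by (rule cl_null)
      then show ?thesis using val_meas(1)[OF repM[OF a] \<rho>(1)[OF a]] by simp
    qed
    then show "\<nu>' E = 0" unfolding \<nu>'_def by simp
  qed
  have faith: "m'' \<in> N" if m'': "m'' \<in> M" "m'' \<subseteq> m'" "restr_zero M \<nu>' m''" for m''
  proof -
    have piece: "m'' \<inter> rep a \<in> N" if a: "a \<in> F" for a
    proof -
      define E where "E = m'' \<inter> rep a"
      have EM: "E \<in> M" unfolding E_def using m''(1) repM[OF a] by blast
      have "\<nu>' E = 0" using m''(3) EM unfolding restr_zero_def E_def by blast
      then have s0: "(\<Sum>b\<in>F. \<rho> b (cl (E \<inter> rep b))) = 0" unfolding \<nu>'_def of_real_eq_0_iff .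
      have nn: "\<And>b. b \<in> F \<Longrightarrow> 0 \<le> \<rho> b (cl (E \<inter> rep b))" using \<rho>(2) inD EM by blast
      have "(\<Sum>b\<in>F. \<rho> b (cl (E \<inter> rep b))) = 0 \<longleftrightarrow> (\<forall>b\<in>F. \<rho> b (cl (E \<inter> rep b)) = 0)"
        by (rule sum_nonneg_eq_0_iff[OF F(1)]) (rule nn)
      then have "\<rho> a (cl (E \<inter> rep a)) = 0" using s0 a by blast
      then have "cl (E \<inter> rep a) = cl {}" using \<rho>(3)[OF a inD[OF a EM]] by blast
      moreover have "E \<inter> rep a = E" unfolding E_def by blast
      ultimately have "cl E = cl {}" by simp
      then show ?thesis using cl_empty_iff[OF EM] unfolding E_def by blast
    qed
    have "m'' = (\<Union>a\<in>F. m'' \<inter> rep a)" using m''(2) m'(2) by blast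
    then show ?thesis using null_finUN[OF F(1), of "\<lambda>a. m'' \<inter> rep a"] piece by simp
  qed
  show ?thesis unfolding sigma_finite_set_def using fm faith by blast
qed

lemma dir1_ess:
  fixes \<nu> :: "'a set set \<Rightarrow> complex"
  assumes loc: "localizable X M N" and cv: "continuous_valuation_on Q le \<nu>"
  shows "essential M N (\<lambda>m\<in>M. \<nu> (cl m))"
  unfolding essential_def
proof (intro ballI impI)
  fix m assume m: "m \<in> M" "\<not> restr_zero M (\<lambda>m\<in>M. \<nu> (cl m)) m"
  then obtain s where s: "s \<in> M" "s \<subseteq> m" "\<nu> (cl s) \<noteq> 0" unfolding restr_zero_def by auto
  define Fa where "Fa = {a \<in> Q. has_faithful_valuation_below M N a}"
  have lubX: "is_lub Q le Fa (cl X)" using loc unfolding localizable_def Fa_def by simp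
  have FaQ: "Fa \<subseteq> Q" unfolding Fa_def by blast
  have repM: "a \<in> Q \<Longrightarrow> rep a \<in> M" for a using rep_q(1) by blast
  define I where "I = {cl (s \<inter> \<Union>(rep ` F)) | F. finite F \<and> F \<subseteq> Fa}"
  have Mset: "s \<inter> \<Union>(rep ` F) \<in> M" if "finite F" "F \<subseteq> Fa" for F
  proof -
    have "\<Union>(rep ` F) \<in> M" using that FaQ repM by (intro finite_UN) auto
    then show ?thesis using s(1) by blast
  qed
  have IQ: "I \<subseteq> Q" unfolding I_def using Mset qcls_in by blast
  have tr: "\<And>x y z. x \<in> I \<Longrightarrow> y \<in> I \<Longrightarrow> z \<in> I \<Longrightarrow> le x y \<Longrightarrow> le y z \<Longrightarrow> le x z"
    using qle_trans IQ by (meson subsetD)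
  have dir: "directed_in Q le I"
    unfolding directed_in_def
  proof (intro conjI ballI)
    show "I \<subseteq> Q" by fact
    show "I \<noteq> {}" unfolding I_def by blast
    fix x y assume "x \<in> I" "y \<in> I"
    then obtain F G where FG: "x = cl (s \<inter> \<Union>(rep ` F))" "finite F" "F \<subseteq> Fa"
      "y = cl (s \<inter> \<Union>(rep ` G))" "finite G" "G \<subseteq> Fa" unfolding I_def by blast
    have zI: "cl (s \<inter> \<Union>(rep ` (F \<union> G))) \<in> I" unfolding I_def using FG by blast
    have MFG: "s \<inter> \<Union>(rep ` (F \<union> G)) \<in> M" using Mset[of "F \<union> G"] FG by blast
    have "le x (cl (s \<inter> \<Union>(rep ` (F \<union> G))))" unfolding FG(1)
      by (rule qle_subset[OF Mset[OF FG(2,3)] MFG]) blast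
    moreover have "le y (cl (s \<inter> \<Union>(rep ` (F \<union> G))))" unfolding FG(4)
      by (rule qle_subset[OF Mset[OF FG(5,6)] MFG]) blast
    ultimately show "\<exists>z\<in>I. le x z \<and> le y z" using zI by blast
  qed
  have lub: "is_lub Q le I (cl s)"
    unfolding is_lub_def
  proof (intro conjI ballI impI)
    show "cl s \<in> Q" using qcls_in[OF s(1)] .
    fix x assume "x \<in> I"
    then obtain F where F: "x = cl (s \<inter> \<Union>(rep ` F))" "finite F" "F \<subseteq> Fa" unfolding I_def by blast
    show "le x (cl s)" unfolding F(1) by (rule qle_subset[OF Mset[OF F(2,3)] s(1)]) blast
  next
    fix u assume u: "u \<in> Q" "\<forall>x\<in>I. le x u"
    define u0 where "u0 = rep u"
    have u0: "u0 \<in> M" "cl u0 = u" unfolding u0_def using rep_q u by auto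
    define c where "c = X - (s - u0)"
    have cM: "c \<in> M" unfolding c_def using s(1) u0(1) by blast
    have "le a (cl c)" if a: "a \<in> Fa" for a
    proof -
      have aQ: "a \<in> Q" using a FaQ by blast
      have "cl (s \<inter> \<Union>(rep ` {a})) \<in> I" unfolding I_def using a by blast
      then have "le (cl (s \<inter> \<Union>(rep ` {a}))) (cl u0)" using u(2) u0(2) by simp
      then have "(s \<inter> \<Union>(rep ` {a})) - u0 \<in> N" using qle_iff[OF Mset u0(1), of "{a}"] a by simp
      moreover have "rep a - c = (s \<inter> \<Union>(rep ` {a})) - u0" unfolding c_def
        using sets_into_space[OF repM[OF aQ]] by blast
      ultimately have "rep a - c \<in> N" by simp
      then show ?thesis using qle_iff[OF repM[OF aQ] cM] rep_q(2)[OF aQ] by simp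
    qed
    then have "le (cl X) (cl c)" using lubX qcls_in[OF cM] unfolding is_lub_def by blast
    then have "X - c \<in> N" using qle_iff[OF top cM] by simp
    moreover have "X - c = s - u0" unfolding c_def using sets_into_space[OF s(1)] by blast
    ultimately show "le (cl s) u" using qle_iff[OF s(1) u0(1)] u0(2) by simp
  qed
  have cont: "(\<nu> \<longlongrightarrow> \<nu> (cl s)) (directed_filter le I)"
    using cv dir lsup_eq[OF order_refl lub] unfolding continuous_valuation_on_def by metis
  have "eventually (\<lambda>x. \<nu> x \<noteq> 0) (directed_filter le I)"
    by (rule tendsto_imp_eventually_ne[OF cont s(3)])
  then have "\<exists>x\<in>I. \<forall>y\<in>I. le x y \<longrightarrow> \<nu> y \<noteq> 0"
    using eventually_directed_filter[OF dir tr, where P="\<lambda>x. \<nu> x \<noteq> 0"] by simp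
  then obtain x where x: "x \<in> I" "\<forall>y\<in>I. le x y \<longrightarrow> \<nu> y \<noteq> 0" by blast
  have "\<nu> x \<noteq> 0" using x qle_refl IQ by blast
  then obtain F where F: "finite F" "F \<subseteq> Fa" "\<nu> (cl (s \<inter> \<Union>(rep ` F))) \<noteq> 0"
    using x(1) unfolding I_def by blast
  define m' where "m' = s \<inter> \<Union>(rep ` F)"
  have m'M: "m' \<in> M" unfolding m'_def by (rule Mset[OF F(1,2)])
  have "sigma_finite_set M N m'"
  proof (rule faithful_sf[OF F(1)])
    show "F \<subseteq> Q" using F(2) FaQ by blast
    show "\<forall>a\<in>F. has_faithful_valuation_below M N a" using F(2) unfolding Fa_def by blast
    show "m' \<in> M" by fact
    show "m' \<subseteq> \<Union>(rep ` F)" unfolding m'_def by blast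
  qed
  moreover have "\<not> restr_zero M (\<lambda>m\<in>M. \<nu> (cl m)) m'"
    unfolding restr_zero_def using m'M F(3) unfolding m'_def by auto
  moreover have "m' \<subseteq> m" unfolding m'_def using s(2) by blast
  ultimately show "\<exists>m'\<in>M. m' \<subseteq> m \<and> sigma_finite_set M N m' \<and> \<not> restr_zero M (\<lambda>m\<in>M. \<nu> (cl m)) m'"
    using m'M by blast
qed

end

lemma fm_sub: assumes "finite_measure L" "A \<in> sets L" "B \<in> sets L"
  shows "measure L (A \<union> B) \<le> measure L A + measure L B"
  by (rule measure_subadditive[OF assms(2,3)]) (use finite_measure.emeasure_finite[OF assms(1)] in auto)

lemma fm_le_null: assumes "finite_measure L" "A \<in> sets L" "C \<in> sets L" "B \<in> sets L" "A \<subseteq> C \<union> B" "measure L B = 0"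
  shows "measure L A \<le> measure L C"
proof -
  have "measure L A \<le> measure L (C \<union> B)"
    by (rule finite_measure.finite_measure_mono[OF assms(1) assms(5)]) (use assms in auto)
  also have "\<dots> \<le> measure L C + measure L B" by (rule fm_sub) (use assms in auto)
  finally show ?thesis using assms(6) by simp
qed

lemma sup_seq:
  fixes f :: "'b \<Rightarrow> real"
  assumes "I \<noteq> {}" "bdd_above (f ` I)"
  obtains xs where "\<And>n. xs n \<in> I" "\<And>n. f (xs n) > (SUP x\<in>I. f x) - 1 / real (Suc n)"
proof -
  have "\<exists>x\<in>I. (SUP x\<in>I. f x) - 1 / real (Suc n) < f x" for n
  proof -
    have "(SUP x\<in>I. f x) - 1 / real (Suc n) < (SUP x\<in>I. f x)" by simp
    then show ?thesis using less_cSUP_iff[OF assms] by blast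
  qed
  then have "\<forall>n. \<exists>x. x \<in> I \<and> (SUP x\<in>I. f x) - 1 / real (Suc n) < f x" by blast
  then obtain xs where "\<forall>n. xs n \<in> I \<and> (SUP x\<in>I. f x) - 1 / real (Suc n) < f (xs n)"
    by (rule choice[THEN exE]) blast
  then show ?thesis using that by blast
qed

context EMS begin

lemma fin_ub: assumes d: "directed_in Q le I" and F: "finite F" "F \<subseteq> I" shows "\<exists>z\<in>I. \<forall>x\<in>F. le x z"
  using F
proof (induction F rule: finite_induct)
  case empty then show ?case using d unfolding directed_in_def by blast
next
  case (insert a F)
  then obtain z where z: "z \<in> I" "\<forall>x\<in>F. le x z" by blast
  have aI: "a \<in> I" using insert by blast
  obtain w where w: "w \<in> I" "le a w" "le z w" using d aI z(1) unfolding directed_in_def by blast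
  have IQ: "I \<subseteq> Q" using d unfolding directed_in_def by blast
  have "le x w" if "x \<in> F" for x
    using qle_trans[of x z w] z that w insert IQ by blast
  then show ?case using w by blast
qed

lemma restr_sa: assumes "m \<in> M" shows "sigma_algebra m {t \<in> M. t \<subseteq> m}"
proof -
  have "{t \<in> M. t \<subseteq> m} = restricted_space m" using assms by auto
  then show ?thesis using restricted_sigma_algebra[OF assms] by simp
qed

lemma fm_cadd: "finite_measure_on M N \<mu> \<Longrightarrow> cadd M \<mu>"
  unfolding finite_measure_on_def cadd_def by blast

lemma fm_empty: "finite_measure_on M N \<mu> \<Longrightarrow> \<mu> {} = 0"
  unfolding finite_measure_on_def using null_empty by blast

definition nu :: "('a set \<Rightarrow> complex) \<Rightarrow> 'a set set \<Rightarrow> complex" where "nu \<mu> = (\<lambda>A\<in>Q. \<mu> (rep A))"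

context
  fixes \<mu> :: "'a set \<Rightarrow> complex"
  assumes fm\<mu>: "finite_measure_on M N \<mu>" and ess\<mu>: "essential M N \<mu>"
begin

lemma mu_null: "E \<in> N \<Longrightarrow> \<mu> E = 0" using fm\<mu> unfolding finite_measure_on_def by blast

lemma key:
  assumes d: "directed_in Q le I" and lub: "is_lub Q le I s0"
    and Lfm: "finite_measure L" and Ls: "sets L = M"
    and Lb: "\<forall>E\<in>M. cmod (\<mu> E) \<le> measure L E"
    and Lz: "\<forall>E\<in>M. measure L E = 0 \<longleftrightarrow> (\<forall>F\<in>M. F \<subseteq> E \<longrightarrow> \<mu> F = 0)"
    and eps: "\<epsilon> > 0"
  shows "\<exists>x\<in>I. measure L (rep s0 - rep x) < \<epsilon>"
proof (rule ccontr)
  assume "\<not> (\<exists>x\<in>I. measure L (rep s0 - rep x) < \<epsilon>)"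
  then have big: "\<And>x. x \<in> I \<Longrightarrow> \<epsilon> \<le> measure L (rep s0 - rep x)" by (simp add: not_less)
  interpret L: finite_measure L by (rule Lfm)
  define lam where "lam = measure L"
  define s where "s = rep s0"
  have IQ: "I \<subseteq> Q" and Ine: "I \<noteq> {}" using d unfolding directed_in_def by auto
  have s0Q: "s0 \<in> Q" using lub unfolding is_lub_def by blast
  have sM: "s \<in> M" unfolding s_def using rep_q(1)[OF s0Q] .
  have repI: "x \<in> I \<Longrightarrow> rep x \<in> M" for x using rep_q(1) IQ by blast
  have le_rep: "x \<in> I \<Longrightarrow> y \<in> I \<Longrightarrow> le x y \<Longrightarrow> rep x - rep y \<in> N" for x y using qle_rep IQ by blast
  have below: "x \<in> I \<Longrightarrow> rep x - s \<in> N" for x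
    using lub qle_rep[of x s0] IQ s0Q unfolding is_lub_def s_def by blast
  have lnull: "E \<in> N \<Longrightarrow> lam E = 0" for E
    using Lz NM null_sub mu_null unfolding lam_def by metis
  have lnn: "0 \<le> lam E" for E unfolding lam_def by simp
  have lmono: "A \<subseteq> B \<Longrightarrow> B \<in> M \<Longrightarrow> lam A \<le> lam B" for A B
    unfolding lam_def using L.finite_measure_mono Ls by blast
  have lnle: "A \<in> M \<Longrightarrow> C \<in> M \<Longrightarrow> B \<in> N \<Longrightarrow> A \<subseteq> C \<union> B \<Longrightarrow> lam A \<le> lam C" for A B C
    unfolding lam_def using fm_le_null[OF Lfm, of A C B] Ls NM lnull[unfolded lam_def] by blast
  define \<kappa> where "\<kappa> x = lam (s \<inter> rep x)" for x
  have kb: "\<kappa> x \<le> lam s" for x unfolding \<kappa>_def by (rule lmono[OF _ sM]) blast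
  have bdd: "bdd_above (\<kappa> ` I)" using kb by (intro bdd_aboveI) blast
  define c where "c = (SUP x\<in>I. \<kappa> x)"
  have cub: "x \<in> I \<Longrightarrow> \<kappa> x \<le> c" for x unfolding c_def by (rule cSUP_upper[OF _ bdd])
  obtain xs where xs: "\<And>n. xs n \<in> I" "\<And>n. \<kappa> (xs n) > c - 1 / real (Suc n)"
    using sup_seq[OF Ine bdd] unfolding c_def by blast
  define T where "T = (\<Union>n. s \<inter> rep (xs n))"
  have TM: "T \<in> M" unfolding T_def using sM repI xs(1) by blast
  have c1: "\<epsilon> \<le> lam (s - T)"
  proof -
    define Dk where "Dk n = s - (\<Union>k\<in>{..n}. rep (xs k))" for n
    have DkM: "Dk n \<in> M" for n unfolding Dk_def using sM repI xs(1) by blast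
    have dec: "decseq Dk" unfolding decseq_def Dk_def by auto
    have int: "(\<Inter>n. Dk n) = s - T" unfolding Dk_def T_def by auto
    have "(\<lambda>n. lam (Dk n)) \<longlonglongrightarrow> lam (\<Inter>n. Dk n)"
      unfolding lam_def by (rule L.finite_Lim_measure_decseq) (use DkM dec Ls in auto)
    moreover have "\<epsilon> \<le> lam (Dk n)" for n
    proof -
      obtain z where z: "z \<in> I" "\<forall>x\<in>xs ` {..n}. le x z" using fin_ub[OF d, of "xs ` {..n}"] xs(1) by blast
      have nul: "(\<Union>k\<in>{..n}. rep (xs k) - rep z) \<in> N"
        by (rule null_finUN) (use le_rep xs(1) z in auto)
      have "lam (s - rep z) \<le> lam (Dk n)"
        by (rule lnle[OF _ DkM nul]) (use sM repI z(1) in \<open>auto simp: Dk_def\<close>)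
      then show ?thesis using big[OF z(1)] unfolding s_def lam_def by simp
    qed
    ultimately show ?thesis unfolding int by (intro LIMSEQ_le_const) auto
  qed
  have "lam (s - T) \<noteq> 0" using c1 eps by linarith
  then have nrz: "\<not> restr_zero M \<mu> (s - T)" using Lz sM TM unfolding restr_zero_def lam_def by blast
  obtain m' where m': "m' \<in> M" "m' \<subseteq> s - T" "sigma_finite_set M N m'" "\<not> restr_zero M \<mu> m'"
    using ess\<mu> sM TM nrz unfolding essential_def by blast
  have lm'0: "lam m' \<noteq> 0" using Lz m'(1,4) unfolding restr_zero_def lam_def by blast
  have lm': "lam m' > 0" using lm'0 lnn[of m'] by linarith
  obtain \<rho> where \<rho>fm: "finite_measure_on {t \<in> M. t \<subseteq> m'} {t \<in> N. t \<subseteq> m'} \<rho>"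
    and \<rho>f: "\<forall>m''\<in>M. m'' \<subseteq> m' \<longrightarrow> restr_zero M \<rho> m'' \<longrightarrow> m'' \<in> N"
    using m'(3) unfolding sigma_finite_set_def by blast
  have \<rho>ca: "cadd {t \<in> M. t \<subseteq> m'} \<rho>" using \<rho>fm unfolding finite_measure_on_def cadd_def by blast
  have \<rho>0: "\<rho> {} = 0" using \<rho>fm null_empty unfolding finite_measure_on_def by blast
  obtain Lr where Lr: "finite_measure Lr" "sets Lr = {t \<in> M. t \<subseteq> m'}"
    "\<forall>E\<in>{t \<in> M. t \<subseteq> m'}. measure Lr E = 0 \<longleftrightarrow> (\<forall>F\<in>{t \<in> M. t \<subseteq> m'}. F \<subseteq> E \<longrightarrow> \<rho> F = 0)"
    using cadd_variation[OF restr_sa[OF m'(1)] \<rho>ca \<rho>0] by (elim exE conjE) (rule that; assumption)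
  interpret Lr: finite_measure Lr by (rule Lr(1))
  define lr where "lr = measure Lr"
  have \<rho>z: "\<And>A. A \<in> N \<Longrightarrow> A \<subseteq> m' \<Longrightarrow> \<rho> A = 0"
    using \<rho>fm[unfolded finite_measure_on_def, THEN conjunct2] by blast
  have Lr3: "E \<in> M \<Longrightarrow> E \<subseteq> m' \<Longrightarrow> lr E = 0 \<longleftrightarrow> (\<forall>F\<in>{t \<in> M. t \<subseteq> m'}. F \<subseteq> E \<longrightarrow> \<rho> F = 0)" for E
  proof -
    assume "E \<in> M" "E \<subseteq> m'"
    then have "E \<in> {t \<in> M. t \<subseteq> m'}" by blast
    from Lr(3)[rule_format, OF this] show ?thesis unfolding lr_def .
  qed
  have lr_faith: "E \<in> M \<Longrightarrow> E \<subseteq> m' \<Longrightarrow> lr E = 0 \<Longrightarrow> E \<in> N" for E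
  proof -
    assume E: "E \<in> M" "E \<subseteq> m'" "lr E = 0"
    then have "\<forall>F\<in>{t \<in> M. t \<subseteq> m'}. F \<subseteq> E \<longrightarrow> \<rho> F = 0" using Lr3[OF E(1,2)] by simp
    then have "restr_zero M \<rho> E" unfolding restr_zero_def using E(2) by blast
    then show "E \<in> N" using \<rho>f E(1,2) by blast
  qed
  have lr_null: "E \<in> N \<Longrightarrow> E \<subseteq> m' \<Longrightarrow> lr E = 0" for E
  proof -
    assume E: "E \<in> N" "E \<subseteq> m'"
    have "\<rho> F = 0" if "F \<in> {t \<in> M. t \<subseteq> m'}" "F \<subseteq> E" for F
      using \<rho>z null_sub[OF E(1) that(2)] that E(2) by blast
    then show "lr E = 0" using Lr3[OF NM[OF E(1)] E(2)] by blast
  qed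
  have lrnn: "0 \<le> lr E" for E unfolding lr_def by simp
  have lrmono: "A \<subseteq> B \<Longrightarrow> B \<in> M \<Longrightarrow> B \<subseteq> m' \<Longrightarrow> lr A \<le> lr B" for A B
    unfolding lr_def using Lr.finite_measure_mono Lr(2) by blast
  define \<kappa>r where "\<kappa>r x = lr (m' \<inter> rep x)" for x
  have krb: "\<kappa>r x \<le> lr m'" for x unfolding \<kappa>r_def by (rule lrmono[OF _ m'(1)]) blast+
  have bddr: "bdd_above (\<kappa>r ` I)" using krb by (intro bdd_aboveI) blast
  define dd where "dd = (SUP x\<in>I. \<kappa>r x)"
  have dub: "x \<in> I \<Longrightarrow> \<kappa>r x \<le> dd" for x unfolding dd_def by (rule cSUP_upper[OF _ bddr])
  obtain ys where ys: "\<And>n. ys n \<in> I" "\<And>n. \<kappa>r (ys n) > dd - 1 / real (Suc n)"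
    using sup_seq[OF Ine bddr] unfolding dd_def by blast
  define T' where "T' = (\<Union>n. m' \<inter> rep (ys n))"
  have T'M: "T' \<in> M" unfolding T'_def using m'(1) repI ys(1) by blast
  have T'm: "T' \<subseteq> m'" unfolding T'_def by blast
  have c2: "m' \<inter> rep x - T' \<in> N" if x: "x \<in> I" for x
  proof (rule ccontr)
    define G where "G = m' \<inter> rep x - T'"
    assume "m' \<inter> rep x - T' \<notin> N"
    then have GN: "G \<notin> N" unfolding G_def .
    have GM: "G \<in> M" unfolding G_def using m'(1) repI[OF x] T'M by blast
    have Gm: "G \<subseteq> m'" unfolding G_def by blast
    have "lr G \<noteq> 0" using lr_faith[OF GM Gm] GN by blast
    then have \<delta>: "lr G > 0" using lrnn[of G] by linarith
    obtain n where n: "inverse (real (Suc n)) < lr G" using reals_Archimedean[OF \<delta>] by blast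
    obtain z where z: "z \<in> I" "\<forall>y\<in>{x, ys n}. le y z" using fin_ub[OF d, of "{x, ys n}"] x ys(1) by blast
    define U1 where "U1 = (m' \<inter> rep (ys n)) \<union> G"
    have A1M: "m' \<inter> rep (ys n) \<in> M" using m'(1) repI ys(1) by blast
    have disj: "(m' \<inter> rep (ys n)) \<inter> G = {}" unfolding G_def T'_def by blast
    have "lr U1 = \<kappa>r (ys n) + lr G" unfolding U1_def \<kappa>r_def lr_def
      by (rule Lr.finite_measure_Union) (use A1M GM Gm disj Lr(2) in auto)
    moreover have "lr U1 \<le> \<kappa>r z"
    proof -
      define B where "B = m' \<inter> ((rep (ys n) - rep z) \<union> (rep x - rep z))"
      have lz: "le (ys n) z" "le x z" using z(2) by auto
      have "(rep (ys n) - rep z) \<union> (rep x - rep z) \<in> N"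
        by (rule null_Un[OF le_rep[OF ys(1) z(1) lz(1)] le_rep[OF x z(1) lz(2)]])
      then have BN: "B \<in> N" unfolding B_def by (rule null_sub) blast
      have zM: "m' \<inter> rep z \<in> M" using m'(1) repI[OF z(1)] by blast
      have U1M: "U1 \<in> M" unfolding U1_def using A1M GM by blast
      have "lr U1 \<le> lr ((m' \<inter> rep z) \<union> B)"
        by (rule lrmono) (use zM BN NM U1M in \<open>auto simp: U1_def B_def G_def\<close>)
      also have "\<dots> \<le> lr (m' \<inter> rep z) + lr B"
        unfolding lr_def by (rule fm_sub[OF Lr(1)]) (use zM BN NM Lr(2) in \<open>auto simp: B_def\<close>)
      also have "lr B = 0" by (rule lr_null[OF BN]) (simp add: B_def)
      finally show ?thesis unfolding \<kappa>r_def by simp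
    qed
    ultimately have "\<kappa>r (ys n) + lr G \<le> dd" using dub[OF z(1)] by linarith
    moreover have "dd - inverse (real (Suc n)) < \<kappa>r (ys n)" using ys(2)[of n] by (simp add: inverse_eq_divide)
    ultimately show False using n by linarith
  qed
  define c' where "c' = X - (m' - T')"
  have c'M: "c' \<in> M" unfolding c'_def using m'(1) T'M by blast
  have "le x (cl c')" if x: "x \<in> I" for x
  proof -
    have "rep x - c' = m' \<inter> rep x - T'" unfolding c'_def using sets_into_space[OF repI[OF x]] by blast
    then have "rep x - c' \<in> N" using c2[OF x] by simp
    then show ?thesis using qle_iff[OF repI[OF x] c'M] rep_q(2) x IQ by auto
  qed
  then have "le s0 (cl c')" using lub qcls_in[OF c'M] unfolding is_lub_def by blast
  then have "s - c' \<in> N" using qle_iff[OF sM c'M] rep_q(2)[OF s0Q] unfolding s_def by simp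
  moreover have "s - c' = m' - T'" unfolding c'_def using m'(2) sets_into_space[OF sM] by blast
  ultimately have mT: "m' - T' \<in> N" by simp
  have "lam m' \<le> lam T'" by (rule lnle[OF m'(1) T'M mT]) blast
  then have lT': "lam T' > 0" using lm' by linarith
  define H where "H n = (\<Union>k\<in>{..n}. m' \<inter> rep (ys k))" for n
  have HM: "H n \<in> M" for n unfolding H_def using m'(1) repI ys(1) by blast
  have inc: "incseq H" unfolding incseq_def H_def by (intro allI impI UN_mono) auto
  have UH: "(\<Union>n. H n) = T'" unfolding H_def T'_def by auto
  have "(\<lambda>n. lam (H n)) \<longlonglongrightarrow> lam (\<Union>n. H n)"
    unfolding lam_def by (rule L.finite_Lim_measure_incseq) (use HM inc Ls in auto)
  then have "eventually (\<lambda>n. 0 < lam (H n)) sequentially" using lT' UH order_tendstoD(1) by metis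
  then obtain n where hn: "0 < lam (H n)" unfolding eventually_sequentially by blast
  obtain j where j: "inverse (real (Suc j)) < lam (H n)" using reals_Archimedean[OF hn] by blast
  obtain z where z: "z \<in> I" "\<forall>y\<in>insert (xs j) (ys ` {..n}). le y z"
    using fin_ub[OF d, of "insert (xs j) (ys ` {..n})"] xs(1) ys(1) by blast
  define U0 where "U0 = (s \<inter> rep (xs j)) \<union> H n"
  have A0M: "s \<inter> rep (xs j) \<in> M" using sM repI xs(1) by blast
  have disj: "(s \<inter> rep (xs j)) \<inter> H n = {}"
  proof -
    have "s \<inter> rep (xs j) \<subseteq> T" unfolding T_def by blast
    moreover have "H n \<subseteq> m'" unfolding H_def by blast
    ultimately show ?thesis using m'(2) by blast
  qed
  have "lam U0 = \<kappa> (xs j) + lam (H n)" unfolding U0_def \<kappa>_def lam_def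
    by (rule L.finite_measure_Union) (use A0M HM disj Ls in auto)
  moreover have "lam U0 \<le> \<kappa> z"
  proof -
    define B where "B = (rep (xs j) - rep z) \<union> (\<Union>k\<in>{..n}. rep (ys k) - rep z)"
    have lz: "le (xs j) z" "\<And>k. k \<le> n \<Longrightarrow> le (ys k) z" using z(2) by auto
    have "(\<Union>k\<in>{..n}. rep (ys k) - rep z) \<in> N"
      by (rule null_finUN) (use le_rep[OF ys(1) z(1) lz(2)] in auto)
    then have BN: "B \<in> N" unfolding B_def by (rule null_Un[OF le_rep[OF xs(1) z(1) lz(1)]])
    have zM: "s \<inter> rep z \<in> M" using sM repI[OF z(1)] by blast
    have U0M: "U0 \<in> M" unfolding U0_def using A0M HM by blast
    have Hs: "H n \<subseteq> s" unfolding H_def using m'(2) by blast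
    have "U0 \<subseteq> (s \<inter> rep z) \<union> B" unfolding U0_def B_def using Hs unfolding H_def by blast
    then show ?thesis unfolding \<kappa>_def by (rule lnle[OF U0M zM BN])
  qed
  ultimately have "\<kappa> (xs j) + lam (H n) \<le> c" using cub[OF z(1)] by linarith
  moreover have "c - inverse (real (Suc j)) < \<kappa> (xs j)" using xs(2)[of j] by (simp add: inverse_eq_divide)
  ultimately show False using j by linarith
qed

lemma mu_add: "A \<in> M \<Longrightarrow> B \<in> M \<Longrightarrow> \<mu> A = \<mu> (A \<inter> B) + \<mu> (A - B)"
  by (rule cadd_diff[OF sa fm_cadd[OF fm\<mu>] fm_empty[OF fm\<mu>]])

lemma mu_cong: assumes "a \<in> M" "b \<in> M" "(a - b) \<union> (b - a) \<in> N" shows "\<mu> a = \<mu> b"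
proof -
  have "a - b \<in> N" "b - a \<in> N" using assms(3) null_sub by blast+
  then have "\<mu> (a - b) = 0" "\<mu> (b - a) = 0" using mu_null by auto
  moreover have "b \<inter> a = a \<inter> b" by blast
  ultimately show ?thesis using mu_add[OF assms(1,2)] mu_add[OF assms(2,1)] by simp
qed


lemma nu_cl: "m \<in> M \<Longrightarrow> nu \<mu> (cl m) = \<mu> m"
  unfolding nu_def using qcls_in rep_cl mu_cong by (simp add: Un_commute)

lemma nu_valuation: "valuation_on Q le (nu \<mu>)"
  unfolding valuation_on_def
proof (intro conjI ballI)
  show "nu \<mu> (lbot Q le) = 0" using lbot_Dn[OF top] Dn_X nu_cl[OF empty_sets] fm_empty[OF fm\<mu>] by simp
  fix x y assume xy: "x \<in> Q" "y \<in> Q"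
  define a where "a = rep x"
  define b where "b = rep y"
  have ab: "a \<in> M" "b \<in> M" "cl a = x" "cl b = y" unfolding a_def b_def using rep_q xy by auto
  have ar: "a - X \<in> N" "b - X \<in> N" using null_diff_sub sets_into_space ab by auto
  have "lsup Q le {x, y} = cl (a \<union> b)" using lsup2[OF top ab(1,2) ar] Dn_X ab by simp
  moreover have "linf Q le {x, y} = cl (a \<inter> b)" using linf2[OF top ab(1,2) ar] Dn_X ab by simp
  moreover have "\<mu> a + \<mu> b = \<mu> (a \<union> b) + \<mu> (a \<inter> b)"
  proof -
    have "\<mu> (a \<union> b) = \<mu> ((a \<union> b) \<inter> a) + \<mu> ((a \<union> b) - a)" using mu_add ab by blast
    moreover have "(a \<union> b) \<inter> a = a" "(a \<union> b) - a = b - a" by blast+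
    moreover have "\<mu> b = \<mu> (b \<inter> a) + \<mu> (b - a)" using mu_add ab by blast
    moreover have "b \<inter> a = a \<inter> b" by blast
    ultimately show ?thesis by simp
  qed
  moreover have "a \<union> b \<in> M" "a \<inter> b \<in> M" using ab by blast+
  ultimately show "nu \<mu> x + nu \<mu> y = nu \<mu> (lsup Q le {x, y}) + nu \<mu> (linf Q le {x, y})"
    using nu_cl ab by auto
qed

lemma nu_cont: assumes qc: "quot_complete M N" and d: "directed_in Q le I"
  shows "((nu \<mu>) \<longlongrightarrow> nu \<mu> (lsup Q le I)) (directed_filter le I)"
proof -
  have IQ: "I \<subseteq> Q" using d unfolding directed_in_def by blast
  obtain s0 where lub: "is_lub Q le I s0" using qc IQ unfolding quot_complete_def by blast
  have ls: "lsup Q le I = s0" by (rule lsup_eq[OF order_refl lub])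
  have s0Q: "s0 \<in> Q" using lub unfolding is_lub_def by blast
  define s where "s = rep s0"
  have sM: "s \<in> M" unfolding s_def using rep_q(1)[OF s0Q] .
  obtain L where L: "finite_measure L" "sets L = M" "space L = X" "\<forall>E\<in>M. cmod (\<mu> E) \<le> measure L E"
    "\<forall>E\<in>M. measure L E = 0 \<longleftrightarrow> (\<forall>F\<in>M. F \<subseteq> E \<longrightarrow> \<mu> F = 0)"
    using cadd_variation[OF sa fm_cadd[OF fm\<mu>] fm_empty[OF fm\<mu>]] by (elim exE conjE) (rule that; assumption)
  interpret L: finite_measure L by (rule L(1))
  have tr0: "\<And>x y z. x \<in> I \<Longrightarrow> y \<in> I \<Longrightarrow> z \<in> I \<Longrightarrow> le x y \<Longrightarrow> le y z \<Longrightarrow> le x z"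
    using qle_trans IQ by (meson subsetD)
  have lnull: "E \<in> N \<Longrightarrow> measure L E = 0" for E
    using L(5) NM null_sub mu_null by metis
  show ?thesis unfolding ls
  proof (rule tendstoI)
    fix e :: real assume e: "0 < e"
    obtain x0 where x0: "x0 \<in> I" "measure L (s - rep x0) < e" using key[OF d lub L(1,2,4,5) e] unfolding s_def by blast
    have "\<forall>y\<in>I. le x0 y \<longrightarrow> dist (nu \<mu> y) (nu \<mu> s0) < e"
    proof (intro ballI impI)
      fix y assume y: "y \<in> I" "le x0 y"
      have yQ: "y \<in> Q" using y IQ by blast
      have yM: "rep y \<in> M" using rep_q(1)[OF yQ] .
      have x0Q: "x0 \<in> Q" using x0 IQ by blast
      have x0M: "rep x0 \<in> M" using rep_q(1)[OF x0Q] .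
      have "le y s0" using lub y unfolding is_lub_def by blast
      then have ys: "rep y - s \<in> N" using qle_rep[OF yQ s0Q] unfolding s_def by simp
      have xy: "rep x0 - rep y \<in> N" using qle_rep[OF x0Q yQ] y(2) by simp
      have nuy: "nu \<mu> y = \<mu> (rep y)" unfolding nu_def using yQ by simp
      have nus: "nu \<mu> s0 = \<mu> s" unfolding nu_def s_def using s0Q by simp
      have "\<mu> (rep y) = \<mu> (rep y \<inter> s) + \<mu> (rep y - s)" using mu_add yM sM by blast
      moreover have "\<mu> (rep y - s) = 0" using mu_null[OF ys] .
      moreover have "\<mu> s = \<mu> (s \<inter> rep y) + \<mu> (s - rep y)" using mu_add yM sM by blast
      moreover have "rep y \<inter> s = s \<inter> rep y" by blast
      ultimately have "nu \<mu> y - nu \<mu> s0 = - \<mu> (s - rep y)" using nuy nus by simp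
      then have "dist (nu \<mu> y) (nu \<mu> s0) = cmod (\<mu> (s - rep y))" by (simp add: dist_norm)
      also have "\<dots> \<le> measure L (s - rep y)" using L(4) sM yM by blast
      also have "\<dots> \<le> measure L (s - rep x0)"
        by (rule fm_le_null[OF L(1), of _ _ "rep x0 - rep y"]) (use sM yM x0M xy NM lnull L(2) in auto)
      finally show "dist (nu \<mu> y) (nu \<mu> s0) < e" using x0(2) by simp
    qed
    then have "\<exists>x\<in>I. \<forall>y\<in>I. le x y \<longrightarrow> dist (nu \<mu> y) (nu \<mu> s0) < e" using x0(1) by blast
    moreover have "eventually (\<lambda>y. dist (nu \<mu> y) (nu \<mu> s0) < e) (directed_filter le I) \<longleftrightarrow>
        (\<exists>x\<in>I. \<forall>y\<in>I. le x y \<longrightarrow> dist (nu \<mu> y) (nu \<mu> s0) < e)"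
    proof (rule eventually_directed_filter[OF d])
      fix x y z assume "x \<in> I" "y \<in> I" "z \<in> I" "le x y" "le y z"
      then show "le x z" by (rule tr0)
    qed
    ultimately show "eventually (\<lambda>y. dist (nu \<mu> y) (nu \<mu> s0) < e) (directed_filter le I)" by blast
  qed
qed

lemma nu_image: "(\<lambda>m\<in>M. nu \<mu> (cl m)) = \<mu>" if "\<mu> \<in> M \<rightarrow>\<^sub>E UNIV"
proof
  fix m show "(\<lambda>m\<in>M. nu \<mu> (cl m)) m = \<mu> m"
    using nu_cl that by (cases "m \<in> M") (auto simp: PiE_def extensional_def)
qed

end

lemma main_ems:
  assumes loc: "localizable X M N"
  shows "bij_betw (\<lambda>\<nu>. \<lambda>m\<in>M. \<nu> (qcls M N m))
           {\<nu> \<in> quot M N \<rightarrow>\<^sub>E (UNIV :: complex set). continuous_valuation_on (quot M N) (qle N) \<nu>}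
           {\<mu> \<in> M \<rightarrow>\<^sub>E (UNIV :: complex set). finite_measure_on M N \<mu> \<and> essential M N \<mu>}"
  unfolding bij_betw_def
proof (intro conjI)
  show "inj_on (\<lambda>\<nu>. \<lambda>m\<in>M. \<nu> (cl m)) {\<nu> \<in> Q \<rightarrow>\<^sub>E (UNIV :: complex set). continuous_valuation_on Q le \<nu>}"
  proof (rule inj_onI)
    fix \<nu>1 \<nu>2 :: "'a set set \<Rightarrow> complex"
    assume n1: "\<nu>1 \<in> {\<nu> \<in> Q \<rightarrow>\<^sub>E UNIV. continuous_valuation_on Q le \<nu>}"
      and n2: "\<nu>2 \<in> {\<nu> \<in> Q \<rightarrow>\<^sub>E UNIV. continuous_valuation_on Q le \<nu>}"
      and eq: "(\<lambda>m\<in>M. \<nu>1 (cl m)) = (\<lambda>m\<in>M. \<nu>2 (cl m))"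
    show "\<nu>1 = \<nu>2"
    proof
      fix A
      show "\<nu>1 A = \<nu>2 A"
      proof (cases "A \<in> Q")
        case True
        have "(\<lambda>m\<in>M. \<nu>1 (cl m)) (rep A) = (\<lambda>m\<in>M. \<nu>2 (cl m)) (rep A)" using eq by simp
        then show ?thesis using rep_q[OF True] by simp
      next
        case False
        then show ?thesis using n1 n2 by (auto simp: PiE_def extensional_def)
      qed
    qed
  qed
  show "(\<lambda>\<nu>. \<lambda>m\<in>M. \<nu> (cl m)) ` {\<nu> \<in> Q \<rightarrow>\<^sub>E (UNIV :: complex set). continuous_valuation_on Q le \<nu>} =
        {\<mu> \<in> M \<rightarrow>\<^sub>E UNIV. finite_measure_on M N \<mu> \<and> essential M N \<mu>}"
  proof (intro equalityI subsetI)
    fix \<mu> assume "\<mu> \<in> (\<lambda>\<nu>. \<lambda>m\<in>M. \<nu> (cl m)) ` {\<nu> \<in> Q \<rightarrow>\<^sub>E (UNIV :: complex set). continuous_valuation_on Q le \<nu>}"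
    then obtain \<nu> :: "'a set set \<Rightarrow> complex" where \<nu>: "continuous_valuation_on Q le \<nu>" "\<mu> = (\<lambda>m\<in>M. \<nu> (cl m))" by blast
    have "(\<lambda>m\<in>M. \<nu> (cl m)) \<in> M \<rightarrow>\<^sub>E UNIV" by simp
    then show "\<mu> \<in> {\<mu> \<in> M \<rightarrow>\<^sub>E UNIV. finite_measure_on M N \<mu> \<and> essential M N \<mu>}"
      using dir1_fm[OF \<nu>(1)] dir1_ess[OF loc \<nu>(1)] \<nu>(2) by blast
  next
    fix \<mu> :: "'a set \<Rightarrow> complex" assume "\<mu> \<in> {\<mu> \<in> M \<rightarrow>\<^sub>E UNIV. finite_measure_on M N \<mu> \<and> essential M N \<mu>}"
    then have \<mu>: "\<mu> \<in> M \<rightarrow>\<^sub>E UNIV" "finite_measure_on M N \<mu>" "essential M N \<mu>" by auto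
    have qc: "quot_complete M N" using loc unfolding localizable_def by blast
    have a1: "continuous_valuation_on Q le (nu \<mu>)"
      unfolding continuous_valuation_on_def
      using nu_valuation[OF \<mu>(2,3)] nu_cont[OF \<mu>(2,3) qc] by blast
    have a2: "nu \<mu> \<in> Q \<rightarrow>\<^sub>E UNIV" by (simp add: nu_def)
    have a3: "(\<lambda>m\<in>M. nu \<mu> (cl m)) = \<mu>" by (rule nu_image[OF \<mu>(2,3,1)])
    have mem: "nu \<mu> \<in> {\<nu> \<in> Q \<rightarrow>\<^sub>E (UNIV :: complex set). continuous_valuation_on Q le \<nu>}" using a1 a2 by blast
    show "\<mu> \<in> (\<lambda>\<nu>. \<lambda>m\<in>M. \<nu> (cl m)) ` {\<nu> \<in> Q \<rightarrow>\<^sub>E (UNIV :: complex set). continuous_valuation_on Q le \<nu>}"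
      by (rule image_eqI[where x="nu \<mu>", OF _ mem]) (use a3 in simp)
  qed
qed

end

theorem mainTheorem14:
  fixes X :: "'a set" and M N :: "'a set set"
  assumes "enhanced_measurable_space X M N"
    and "localizable X M N"
  shows "bij_betw (\<lambda>\<nu>. \<lambda>m\<in>M. \<nu> (qcls M N m))
           {\<nu> \<in> quot M N \<rightarrow>\<^sub>E (UNIV :: complex set). continuous_valuation_on (quot M N) (qle N) \<nu>}
           {\<mu> \<in> M \<rightarrow>\<^sub>E (UNIV :: complex set). finite_measure_on M N \<mu> \<and> essential M N \<mu>}"
proof -
  interpret EMS X M N by unfold_locales (rule assms(1))
  show ?thesis by (rule main_ems[OF assms(2)])
qed

end
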